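(* Let $f:\mathbb{R}^n\to(-\infty,+\infty]$ be a proper closed convex function with $S=\arg\min f$ nonempty, let $\bar x\in S$, and let $\mathcal{M}$ be a $C^1$-smooth embedded submanifold of $\mathbb{R}^n$ containing $\bar x$ (with induced metric). Suppose $f$ is $C^1$-partly smooth around $\bar x$ relative to $\mathcal{M}$ with $0\in\operatorname{ri}\partial f(\bar x)$. Then the following are equivalent: (i) there exist $\epsilon,\mu>0$ such that $\mu\,\operatorname{dist}(x,S)\le\operatorname{dist}(0,\partial f(x))$ for all $x\in B_\epsilon(\bar x)$; (ii) there exist $\epsilon,\mu>0$ such that $\mu\,\operatorname{dist}(x,S\cap\mathcal{M})\le\|\nabla_{\mathcal{M}}f(x)\|$ for all $x\in B_\epsilon(\bar x)\cap\mathcal{M}$.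
   Context: Partial smoothness: $f$ is partly smooth at a point $x\in\mathcal M$ relative to a $C^p$ manifold $\mathcal{M}$ (for all subgradients) if: (Regularity) $\hat\partial f(z)=\partial f(z)\neq\varnothing$ for all $z\in\mathcal{M}$ near $x$; (Restricted smoothness) $f|_{\mathcal{M}}$ is $C^p$-smooth around $x$; (Sharpness) $\operatorname{par}\partial f(x)$ (the subspace parallel to the affine hull of $\partial f(x)$) equals the normal space $N_x\mathcal{M}$; (Inner semicontinuity) for every $y\in\partial f(x)$ and every sequence $x_r\to x$ in $\mathcal{M}$ there exist $y_r\in\partial f(x_r)$ with $y_r\to y$. "$C^1$-partly smooth around $\bar x$ relative to $\mathcal{M}$" means this holds with $p=1$ at every point of $\mathcal M$ near $\bar x$. $\nabla_{\mathcal M}f(x)$ is the Riemannian gradient of $f|_{\mathcal M}$, i.e. $P_{T_x\mathcal M}\nabla\tilde f(x)$ for a local smooth extension $\tilde f$. $\operatorname{dist}(0,\emptyset)=+\infty$. *)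

theory Defs
  imports "HOL-Analysis.Analysis" "HOL-Library.Extended_Real"
begin

text \<open>Functions f : R^n -> (-inf,+inf] are modelled as 'a => ereal with 'a a Euclidean space.\<close>

definition proper_fun :: "('a \<Rightarrow> ereal) \<Rightarrow> bool" where
  "proper_fun f \<longleftrightarrow> (\<forall>x. f x \<noteq> -\<infinity>) \<and> (\<exists>x. f x \<noteq> \<infinity>)"

definition epigraph :: "('a \<Rightarrow> ereal) \<Rightarrow> ('a \<times> real) set" where
  "epigraph f = {(x, t). f x \<le> ereal t}"

definition closed_fun :: "('a::topological_space \<Rightarrow> ereal) \<Rightarrow> bool" where
  "closed_fun f \<longleftrightarrow> closed (epigraph f)"

definition convex_fun :: "('a::real_vector \<Rightarrow> ereal) \<Rightarrow> bool" where
  "convex_fun f \<longleftrightarrow> convex (epigraph f)"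

definition argmin_set :: "('a \<Rightarrow> ereal) \<Rightarrow> 'a set" where
  "argmin_set f = {x. \<forall>y. f x \<le> f y}"

definition frechet_subdiff :: "('a::euclidean_space \<Rightarrow> ereal) \<Rightarrow> 'a \<Rightarrow> 'a set" where
  "frechet_subdiff f x = {v. \<bar>f x\<bar> \<noteq> \<infinity> \<and>
     (\<forall>e>0. \<exists>d>0. \<forall>y. norm (y - x) < d \<longrightarrow>
        f y \<ge> f x + ereal (v \<bullet> (y - x) - e * norm (y - x)))}"

definition subdiff :: "('a::euclidean_space \<Rightarrow> ereal) \<Rightarrow> 'a \<Rightarrow> 'a set" where
  "subdiff f x = {v. \<bar>f x\<bar> \<noteq> \<infinity> \<and>
     (\<exists>xs vs. xs \<longlonglongrightarrow> x \<and> (\<lambda>k. f (xs k)) \<longlonglongrightarrow> f x \<and>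
        (\<forall>k. vs k \<in> frechet_subdiff f (xs k)) \<and> vs \<longlonglongrightarrow> v)}"

text \<open>C^1 embedded submanifold of R^n: locally the zero set of a C^1 map
  whose derivative is surjective onto a fixed linear subspace L (i.e. a submersion onto R^k).\<close>
definition C1_submanifold :: "'a::euclidean_space set \<Rightarrow> bool" where
  "C1_submanifold M \<longleftrightarrow> (\<forall>z\<in>M. \<exists>U L (F::'a \<Rightarrow> 'a) (F'::'a \<Rightarrow> 'a \<Rightarrow>\<^sub>L 'a).
     open U \<and> z \<in> U \<and> subspace L \<and>
     (\<forall>y\<in>U. F y \<in> L \<and> (F has_derivative blinfun_apply (F' y)) (at y) \<and>
             range (blinfun_apply (F' y)) = L) \<and>
     continuous_on U F' \<and> M \<inter> U = {y\<in>U. F y = 0})"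

definition tangent_space :: "'a::euclidean_space set \<Rightarrow> 'a \<Rightarrow> 'a set" where
  "tangent_space M x = {v. \<exists>(\<gamma>::real \<Rightarrow> 'a) e. e > 0 \<and> \<gamma> 0 = x \<and>
     (\<forall>t. \<bar>t\<bar> < e \<longrightarrow> \<gamma> t \<in> M) \<and> (\<gamma> has_vector_derivative v) (at 0)}"

definition normal_space :: "'a::euclidean_space set \<Rightarrow> 'a \<Rightarrow> 'a set" where
  "normal_space M x = {w. \<forall>v\<in>tangent_space M x. w \<bullet> v = 0}"

definition par :: "'a::real_vector set \<Rightarrow> 'a set" where
  "par C = span {a - b | a b. a \<in> C \<and> b \<in> C}"

definition C1_on_with_grad :: "'a set \<Rightarrow> ('a::euclidean_space \<Rightarrow> real) \<Rightarrow> ('a \<Rightarrow> 'a) \<Rightarrow> bool" where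
  "C1_on_with_grad U g g' \<longleftrightarrow>
     (\<forall>y\<in>U. (g has_derivative (\<lambda>h. g' y \<bullet> h)) (at y)) \<and> continuous_on U g'"

definition local_smooth_ext ::
  "('a::euclidean_space \<Rightarrow> ereal) \<Rightarrow> 'a set \<Rightarrow> 'a \<Rightarrow> 'a set \<Rightarrow> ('a \<Rightarrow> real) \<Rightarrow> ('a \<Rightarrow> 'a) \<Rightarrow> bool" where
  "local_smooth_ext f M x U g g' \<longleftrightarrow> open U \<and> x \<in> U \<and> C1_on_with_grad U g g' \<and>
     (\<forall>y\<in>M \<inter> U. f y = ereal (g y))"

definition restricted_C1 :: "('a::euclidean_space \<Rightarrow> ereal) \<Rightarrow> 'a set \<Rightarrow> 'a \<Rightarrow> bool" where
  "restricted_C1 f M x \<longleftrightarrow> (\<exists>U g g'. local_smooth_ext f M x U g g')"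

definition riem_grad :: "('a::euclidean_space \<Rightarrow> ereal) \<Rightarrow> 'a set \<Rightarrow> 'a \<Rightarrow> 'a" where
  "riem_grad f M x = (SOME w. \<exists>U g g'. local_smooth_ext f M x U g g' \<and>
       w = closest_point (tangent_space M x) (g' x))"

definition partly_smooth_at :: "('a::euclidean_space \<Rightarrow> ereal) \<Rightarrow> 'a set \<Rightarrow> 'a \<Rightarrow> bool" where
  "partly_smooth_at f M x \<longleftrightarrow> x \<in> M \<and>
     (\<exists>r>0. \<forall>z\<in>M. dist z x < r \<longrightarrow> frechet_subdiff f z = subdiff f z \<and> subdiff f z \<noteq> {}) \<and>
     restricted_C1 f M x \<and>
     par (subdiff f x) = normal_space M x \<and>
     (\<forall>y\<in>subdiff f x. \<forall>xs. (\<forall>r. xs r \<in> M) \<and> xs \<longlonglongrightarrow> x \<longrightarrow>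
        (\<exists>ys. (\<forall>\<^sub>F r in sequentially. ys r \<in> subdiff f (xs r)) \<and> ys \<longlonglongrightarrow> y))"

definition C1_partly_smooth_around :: "('a::euclidean_space \<Rightarrow> ereal) \<Rightarrow> 'a set \<Rightarrow> 'a \<Rightarrow> bool" where
  "C1_partly_smooth_around f M xb \<longleftrightarrow>
     (\<exists>e>0. \<forall>z\<in>M. dist z xb < e \<longrightarrow> partly_smooth_at f M z)"

end

theory Submission
  imports Defs
begin

definition csub :: "('a::euclidean_space \<Rightarrow> ereal) \<Rightarrow> 'a \<Rightarrow> 'a set" where
  "csub f x = {v. \<bar>f x\<bar> \<noteq> \<infinity> \<and> (\<forall>y. f x + ereal (v \<bullet> (y - x)) \<le> f y)}"

lemma convex_fun_ineq:
  assumes "convex_fun f" "f x \<le> ereal a" "f y \<le> ereal b" "0 \<le> t" "t \<le> 1"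
  shows "f ((1-t) *\<^sub>R x + t *\<^sub>R y) \<le> ereal ((1-t)*a + t*b)"
proof -
  have "(x,a) \<in> epigraph f" "(y,b) \<in> epigraph f" using assms by (auto simp: epigraph_def)
  then have "(1-t) *\<^sub>R (x,a) + t *\<^sub>R (y,b) \<in> epigraph f"
    using assms(1,4,5) unfolding convex_fun_def by (intro convexD) auto
  then show ?thesis by (simp add: epigraph_def)
qed

lemma csub_frechet: "csub f x \<subseteq> frechet_subdiff f x"
proof
  fix v assume v: "v \<in> csub f x"
  show "v \<in> frechet_subdiff f x"
    unfolding frechet_subdiff_def
  proof (intro CollectI conjI allI impI)
    show "\<bar>f x\<bar> \<noteq> \<infinity>" using v by (simp add: csub_def)
    fix e :: real assume "e > 0"
    show "\<exists>d>0. \<forall>y. norm (y - x) < d \<longrightarrow> f x + ereal (v \<bullet> (y - x) - e * norm (y - x)) \<le> f y"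
    proof (intro exI[of _ 1] conjI allI impI)
      fix y
      have "f x + ereal (v \<bullet> (y - x) - e * norm (y - x)) \<le> f x + ereal (v \<bullet> (y - x))"
        using \<open>e>0\<close> by (intro add_left_mono) auto
      also have "\<dots> \<le> f y" using v by (simp add: csub_def)
      finally show "f x + ereal (v \<bullet> (y - x) - e * norm (y - x)) \<le> f y" .
    qed simp
  qed
qed

lemma frechet_csub:
  assumes cf: "convex_fun f" and pf: "proper_fun f"
  shows "frechet_subdiff f x \<subseteq> csub f x"
proof
  fix v assume v: "v \<in> frechet_subdiff f x"
  have fx: "\<bar>f x\<bar> \<noteq> \<infinity>" using v by (simp add: frechet_subdiff_def)
  then obtain a where a: "f x = ereal a" by (cases "f x") auto
  have "f x + ereal (v \<bullet> (y - x)) \<le> f y" for y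
  proof (cases "f y = \<infinity>")
    case True then show ?thesis by simp
  next
    case False
    with pf obtain b where b: "f y = ereal b" unfolding proper_fun_def by (cases "f y") auto
    show ?thesis
    proof (rule ccontr)
      assume "\<not> ?thesis"
      then have gt: "a + v \<bullet> (y - x) > b" using a b by simp
      define e where "e = (a + v \<bullet> (y - x) - b) / (2 * (norm (y - x) + 1))"
      have e: "e > 0" using gt unfolding e_def by (intro divide_pos_pos) (auto simp: add_nonneg_pos)
      obtain d where d: "d > 0" and dd: "\<And>z. norm (z - x) < d \<Longrightarrow> f x + ereal (v \<bullet> (z - x) - e * norm (z - x)) \<le> f z"
        using v e unfolding frechet_subdiff_def by blast
      define t where "t = min 1 (d / (2 * (norm (y - x) + 1)))"
      have np: "0 < 2 * norm (y - x) + 2" by (smt (verit) norm_ge_zero)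
      have t0: "t > 0" using d np by (simp add: t_def)
      have t1: "t \<le> 1" by (simp add: t_def)
      have "t * norm (y - x) \<le> (d / (2 * (norm (y - x) + 1))) * (norm (y - x) + 1)"
        by (intro mult_mono) (auto simp: t_def d less_imp_le)
      also have "\<dots> = d / 2" using np by (simp add: field_simps)
      finally have td: "t * norm (y - x) < d" using d by simp
      define z where "z = (1-t) *\<^sub>R x + t *\<^sub>R y"
      have zx: "z - x = t *\<^sub>R (y - x)" by (simp add: z_def algebra_simps)
      have "norm (z - x) < d" using td t0 by (simp add: zx)
      then have "f x + ereal (v \<bullet> (z - x) - e * norm (z - x)) \<le> f z" by (rule dd)
      also have "f z \<le> ereal ((1-t)*a + t*b)" unfolding z_def
        by (rule convex_fun_ineq[OF cf]) (use a b t0 t1 in auto)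
      finally have "a + t * (v \<bullet> (y - x)) - e * t * norm (y - x) \<le> (1-t)*a + t*b"
        using a t0 by (simp add: zx)
      then have "t * (v \<bullet> (y - x) - e * norm (y - x)) \<le> t * (b - a)"
        by (simp add: algebra_simps)
      then have "v \<bullet> (y - x) - e * norm (y - x) \<le> b - a" using t0 by simp
      moreover have "e * norm (y - x) < (a + v \<bullet> (y - x) - b)"
      proof -
        have "e * norm (y - x) \<le> e * (norm (y - x) + 1)" using e by simp
        also have "\<dots> = (a + v \<bullet> (y - x) - b) / 2" using np by (simp add: e_def field_simps)
        also have "\<dots> < a + v \<bullet> (y - x) - b" using gt by simp
        finally show ?thesis .
      qed
      ultimately show False by simp
    qed
  qed
  then show "v \<in> csub f x" using fx by (simp add: csub_def)
qed

lemma subdiff_csub: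
  assumes cf: "convex_fun f" and pf: "proper_fun f"
  shows "subdiff f x = csub f x"
proof
  show "csub f x \<subseteq> subdiff f x"
  proof
    fix v assume v: "v \<in> csub f x"
    then have "v \<in> frechet_subdiff f x" using csub_frechet by blast
    moreover have "\<bar>f x\<bar> \<noteq> \<infinity>" using v by (simp add: csub_def)
    ultimately show "v \<in> subdiff f x" unfolding subdiff_def
      by (intro CollectI conjI exI[of _ "\<lambda>_. x"] exI[of _ "\<lambda>_. v"]) auto
  qed
next
  show "subdiff f x \<subseteq> csub f x"
  proof
    fix v assume v: "v \<in> subdiff f x"
    then have fx: "\<bar>f x\<bar> \<noteq> \<infinity>" by (simp add: subdiff_def)
    from v obtain xs vs where xs: "xs \<longlonglongrightarrow> x" and fxs: "(\<lambda>k. f (xs k)) \<longlonglongrightarrow> f x"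
      and vs: "\<And>k. vs k \<in> frechet_subdiff f (xs k)" and vsl: "vs \<longlonglongrightarrow> v"
      unfolding subdiff_def by blast
    have "f x + ereal (v \<bullet> (y - x)) \<le> f y" for y
    proof -
      have le: "f (xs k) + ereal (vs k \<bullet> (y - xs k)) \<le> f y" for k
        using vs[of k] frechet_csub[OF cf pf] by (auto simp: csub_def)
      have "(\<lambda>k. ereal (vs k \<bullet> (y - xs k))) \<longlonglongrightarrow> ereal (v \<bullet> (y - x))"
        by (intro tendsto_intros vsl xs)
      then have "(\<lambda>k. f (xs k) + ereal (vs k \<bullet> (y - xs k))) \<longlonglongrightarrow> f x + ereal (v \<bullet> (y - x))"
        by (intro tendsto_add_ereal fxs fx) auto
      then show ?thesis using le by (intro LIMSEQ_le_const2) auto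
    qed
    then show "v \<in> csub f x" using fx by (simp add: csub_def)
  qed
qed

lemma fermat_tangent:
  fixes h :: "'a::euclidean_space \<Rightarrow> real"
  assumes t: "t \<in> tangent_space M z" and W: "open W" "z \<in> W"
    and hd: "(h has_derivative (\<lambda>u. D \<bullet> u)) (at z)"
    and mn: "\<forall>y\<in>M \<inter> W. h z \<le> h y"
  shows "D \<bullet> t = 0"
proof -
  obtain \<gamma> e where e: "e > 0" and g0: "\<gamma> 0 = z" and gM: "\<And>s. \<bar>s\<bar> < e \<Longrightarrow> \<gamma> s \<in> M"
    and gd: "(\<gamma> has_vector_derivative t) (at 0)"
    using t unfolding tangent_space_def by blast
  have "isCont \<gamma> 0" using gd unfolding has_vector_derivative_def by (rule has_derivative_continuous)
  then have "\<forall>\<^sub>F s in at 0. \<gamma> s \<in> W"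
    unfolding isCont_def using W g0 by (auto dest: topological_tendstoD)
  then obtain d where d: "d > 0" and dW: "\<And>s. s \<noteq> 0 \<Longrightarrow> dist s 0 < d \<Longrightarrow> \<gamma> s \<in> W"
    unfolding eventually_at by blast
  have der: "((\<lambda>s. h (\<gamma> s)) has_derivative (\<lambda>s. D \<bullet> (s *\<^sub>R t))) (at 0)"
  proof -
    have hd': "(h has_derivative (\<lambda>u. D \<bullet> u)) (at (\<gamma> 0))" using hd g0 by simp
    show ?thesis by (rule has_derivative_compose[OF gd[unfolded has_vector_derivative_def] hd'])
  qed
  have der2: "((\<lambda>s. h (\<gamma> s)) has_real_derivative (D \<bullet> t)) (at 0)"
    unfolding has_field_derivative_def
    by (rule has_derivative_eq_rhs[OF der]) (auto simp: fun_eq_iff mult.commute)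
  show ?thesis
  proof (rule DERIV_local_min[OF der2, of "min d e"])
    show "0 < min d e" using d e by simp
    show "\<forall>y. \<bar>0 - y\<bar> < min d e \<longrightarrow> h (\<gamma> 0) \<le> h (\<gamma> y)"
    proof (intro allI impI)
      fix s :: real assume s: "\<bar>0 - s\<bar> < min d e"
      show "h (\<gamma> 0) \<le> h (\<gamma> s)"
      proof (cases "s = 0")
        case False
        then have "\<gamma> s \<in> W" "\<gamma> s \<in> M" using dW gM s by auto
        then show ?thesis using mn g0 by auto
      qed simp
    qed
  qed
qed

lemma cp_subspace:
  fixes T :: "'a::euclidean_space set"
  assumes "subspace T"
  shows "closest_point T a \<in> T" "\<And>t. t \<in> T \<Longrightarrow> (a - closest_point T a) \<bullet> t = 0"
proof -
  have cl: "closed T" using closed_subspace[OF assms] .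
  have cv: "convex T" using subspace_imp_convex[OF assms] .
  have ne: "T \<noteq> {}" using subspace_0[OF assms] by auto
  show cpT: "closest_point T a \<in> T" using closest_point_in_set[OF cl ne] .
  fix t assume t: "t \<in> T"
  have "closest_point T a + t \<in> T" "closest_point T a - t \<in> T"
    using subspace_add[OF assms cpT t] subspace_diff[OF assms cpT t] by auto
  from closest_point_dot[OF cv cl this(1), of a] closest_point_dot[OF cv cl this(2), of a]
  show "(a - closest_point T a) \<bullet> t = 0" by (simp add: inner_diff_right)
qed

lemma norm_sq_add: "(norm (u + w))^2 = (norm u)^2 + (norm w)^2 + 2 * (u \<bullet> (w::'a::real_inner))"
  unfolding power2_norm_eq_inner inner_add_left inner_add_right by (simp add: inner_commute)

lemma cp_subspace_unique:
  fixes T :: "'a::euclidean_space set"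
  assumes "subspace T" "p \<in> T" "\<And>t. t \<in> T \<Longrightarrow> (a - p) \<bullet> t = 0"
  shows "closest_point T a = p"
proof -
  have cl: "closed T" using closed_subspace[OF assms(1)] .
  have cv: "convex T" using subspace_imp_convex[OF assms(1)] .
  have "dist a p \<le> dist a z" if z: "z \<in> T" for z
  proof -
    have pz: "p - z \<in> T" using assms z subspace_diff by blast
    have "(dist a z)^2 = (norm ((a - p) + (p - z)))^2" by (simp add: dist_norm)
    also have "\<dots> = (norm (a - p))^2 + (norm (p - z))^2 + 2 * ((a - p) \<bullet> (p - z))"
      using norm_sq_add[of "a - p" "p - z"] by simp
    also have "\<dots> \<ge> (dist a p)^2" using assms(3)[OF pz] by (simp add: dist_norm)
    finally have "(dist a p)^2 \<le> (dist a z)^2" .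
    then show ?thesis by (rule power2_le_imp_le) simp
  qed
  then show ?thesis using closest_point_unique[OF cv cl assms(2)] by auto
qed

lemma linear_blinfun_apply: "linear (blinfun_apply f)"
  using blinfun.bounded_linear_right bounded_linear.linear by blast

lemma cp_linear:
  fixes K :: "'a::euclidean_space set"
  assumes K: "subspace K"
  shows "linear (closest_point K)"
proof
  fix x y
  show "closest_point K (x + y) = closest_point K x + closest_point K y"
    using cp_subspace[OF K, where a=x] cp_subspace[OF K, where a=y]
    by (intro cp_subspace_unique[OF K]) (auto intro: subspace_add[OF K] simp: inner_diff_left inner_add_left algebra_simps)
next
  fix c x
  show "closest_point K (c *\<^sub>R x) = c *\<^sub>R closest_point K x"
    using cp_subspace[OF K, where a=x]
    by (intro cp_subspace_unique[OF K]) (auto intro: subspace_scale[OF K] simp: inner_diff_left algebra_simps)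
qed

locale chart =
  fixes U :: "'a::euclidean_space set" and L :: "'a set" and F :: "'a \<Rightarrow> 'a" and F' :: "'a \<Rightarrow> 'a \<Rightarrow>\<^sub>L 'a"
  assumes U: "open U" and L: "subspace L"
    and FL: "\<And>y. y \<in> U \<Longrightarrow> F y \<in> L"
    and Fd: "\<And>y. y \<in> U \<Longrightarrow> (F has_derivative blinfun_apply (F' y)) (at y)"
    and Fr: "\<And>y. y \<in> U \<Longrightarrow> range (blinfun_apply (F' y)) = L"
    and Fc: "continuous_on U F'"
begin

context
  fixes y0 assumes y0: "y0 \<in> U"
begin

definition "A = blinfun_apply (F' y0)"
definition "As = adjoint A"
definition "K = {u. A u = 0}"
definition "P = closest_point K"

lemma linA: "linear A" unfolding A_def by (rule linear_blinfun_apply)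
lemma linAs: "linear As" unfolding As_def by (rule adjoint_linear[OF linA])
lemma subK: "subspace K" unfolding K_def by (rule linear_subspace_kernel[OF linA])
lemma linP: "linear P" unfolding P_def by (rule cp_linear[OF subK])
lemma PK: "P u \<in> K" "\<And>k. k \<in> K \<Longrightarrow> (u - P u) \<bullet> k = 0"
  unfolding P_def using cp_subspace[OF subK] by auto
lemma Pid: "k \<in> K \<Longrightarrow> P k = k" unfolding P_def by (rule closest_point_self)

lemma As_orth: "k \<in> K \<Longrightarrow> k \<bullet> As w = 0"
  using adjoint_works[OF linA, of k w] by (simp add: As_def K_def)

lemma As_K: "As w \<in> K \<Longrightarrow> As w = 0"
  using As_orth[of "As w" w] by simp

lemma As_L: assumes "w \<in> L" "As w = 0" shows "w = 0"
proof -
  have "w \<in> range A" using assms Fr[OF y0] by (simp add: A_def)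
  then obtain x where x: "w = A x" by blast
  have "w \<bullet> w = x \<bullet> As w" using adjoint_works[OF linA, of x w] x by (simp add: As_def)
  then show ?thesis using assms by simp
qed

lemma cancel:
  assumes "As w + P u = c" "c \<in> K" "w \<in> L"
  shows "w = 0"
proof -
  have "As w = c - P u" using assms by (simp add: algebra_simps)
  then have "As w \<in> K" using subspace_diff[OF subK assms(2) PK(1)] by simp
  then show ?thesis using As_K As_L assms(3) by blast
qed

lemma D0_inj:
  assumes "As (A u) + P u = 0" shows "u = 0"
proof -
  have "u \<bullet> As (A u) = A u \<bullet> A u" using adjoint_works[OF linA] by (simp add: As_def)
  moreover have "u \<bullet> P u = P u \<bullet> P u" using PK(2)[where u=u and k="P u", OF PK(1)] by (simp add: inner_diff_left inner_diff_right inner_commute)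
  moreover have "u \<bullet> (As (A u) + P u) = 0" using assms by simp
  ultimately have "A u \<bullet> A u + P u \<bullet> P u = 0" by (simp add: inner_add_right)
  then have "A u = 0" "P u = 0" by (smt (verit) inner_ge_zero inner_eq_zero_iff)+
  then show ?thesis using Pid[of u] by (simp add: K_def)
qed

lemma D0_K: "k \<in> K \<Longrightarrow> As (A k) + P k = k"
  using Pid[of k] linear_0[OF linAs] by (simp add: K_def)


lemma blAs: "bounded_linear As" using linAs linear_conv_bounded_linear by blast
lemma blP: "bounded_linear P" using linP linear_conv_bounded_linear by blast

definition "Phi w = As (F w) + P (w - y0)"
definition "Phi' w = (Blinfun As o\<^sub>L F' w) + Blinfun P"

lemma Phi'_apply: "blinfun_apply (Phi' w) h = As (F' w h) + P h"
  by (simp add: Phi'_def bounded_linear_Blinfun_apply[OF blAs] bounded_linear_Blinfun_apply[OF blP] plus_blinfun.rep_eq)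

lemma Phi_deriv: assumes "w \<in> U" shows "(Phi has_derivative blinfun_apply (Phi' w)) (at w)"
proof -
  have "((\<lambda>w. As (F w) + P (w - y0)) has_derivative (\<lambda>h. As (F' w h) + P (h - 0))) (at w)"
    by (intro has_derivative_add bounded_linear.has_derivative[OF blAs Fd[OF assms]]
        bounded_linear.has_derivative[OF blP] has_derivative_diff has_derivative_ident has_derivative_const)
  then show ?thesis unfolding Phi_def by (rule has_derivative_eq_rhs) (simp add: fun_eq_iff Phi'_apply)
qed

lemma Phi'_cont: "continuous_on U Phi'"
  unfolding Phi'_def by (intro continuous_intros Fc)

lemma Phi'_y0: "blinfun_apply (Phi' y0) u = As (A u) + P u"
  by (simp add: Phi'_apply A_def)

lemma D0_injective: "inj (blinfun_apply (Phi' y0))"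
  by (subst linear_injective_0[OF linear_blinfun_apply]) (auto simp: Phi'_y0 intro: D0_inj)

lemma invf_exists: "\<exists>invf. invf o\<^sub>L Phi' y0 = id_blinfun"
proof -
  obtain g where g: "linear g" "g \<circ> blinfun_apply (Phi' y0) = id"
    using linear_injective_left_inverse[OF linear_blinfun_apply D0_injective] by blast
  have bg: "bounded_linear g" using g(1) linear_conv_bounded_linear by blast
  show ?thesis
    by (rule exI[of _ "Blinfun g"], rule blinfun_eqI)
       (use g(2) in \<open>simp add: bounded_linear_Blinfun_apply[OF bg] fun_eq_iff\<close>)
qed

lemma curve:
  assumes Fy0: "F y0 = 0" and Av: "blinfun_apply (F' y0) v = 0"
  shows "\<exists>\<gamma> e. e > 0 \<and> \<gamma> 0 = y0 \<and> (\<forall>s. \<bar>s\<bar> < e \<longrightarrow> \<gamma> s \<in> U \<and> F (\<gamma> s) = 0) \<and>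
           (\<gamma> has_vector_derivative v) (at 0)"
proof -
  obtain invf where invf: "invf o\<^sub>L Phi' y0 = id_blinfun" using invf_exists by blast
  obtain U' V g g' where "open U'" "U' \<subseteq> U" "y0 \<in> U'" "open V" "Phi y0 \<in> V" and hom: "homeomorphism U' V Phi g"
    and gd: "\<And>y. y \<in> V \<Longrightarrow> (g has_derivative (g' y)) (at y)"
    and g': "\<And>y. y \<in> V \<Longrightarrow> g' y = inv (blinfun_apply (Phi'(g y)))"
    and bij: "\<And>y. y \<in> V \<Longrightarrow> bij (blinfun_apply (Phi'(g y)))"
    using inverse_function_theorem[OF U Phi_deriv Phi'_cont y0 invf] by blast
  have vK: "v \<in> K" using Av by (simp add: K_def A_def)
  have Phi0: "Phi y0 = 0" using Fy0 linear_0[OF linAs] linear_0[OF linP] by (simp add: Phi_def)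
  have g0: "g 0 = y0" using hom \<open>y0 \<in> U'\<close> Phi0 by (metis homeomorphism_apply1)
  obtain r where r: "r > 0" "ball 0 r \<subseteq> V" using \<open>open V\<close> \<open>Phi y0 \<in> V\<close> Phi0 open_contains_ball by metis
  define e where "e = r / (norm v + 1)"
  have e: "e > 0" using r by (simp add: e_def add_nonneg_pos)
  have sV: "s *\<^sub>R v \<in> V" if "\<bar>s\<bar> < e" for s
  proof -
    have "norm (s *\<^sub>R v) = \<bar>s\<bar> * norm v" by simp
    also have "\<dots> \<le> e * norm v" using that by (intro mult_right_mono) auto
    also have "\<dots> < r"
    proof -
      have q: "norm v / (norm v + 1) < 1" by (smt (verit) divide_less_eq_1_pos norm_ge_zero)
      have "e * norm v = r * (norm v / (norm v + 1))" by (simp add: e_def)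
      also have "\<dots> < r * 1" by (rule mult_strict_left_mono[OF q r(1)])
      finally show ?thesis by simp
    qed
    finally show ?thesis using r by auto
  qed
  show ?thesis
  proof (intro exI conjI allI impI)
    show "e > 0" by fact
    show "g (0 *\<^sub>R v) = y0" using g0 by simp
    fix s :: real assume s: "\<bar>s\<bar> < e"
    have gs: "g (s *\<^sub>R v) \<in> U'" using hom sV[OF s] by (metis homeomorphism_image2 imageI)
    then show "g (s *\<^sub>R v) \<in> U" using \<open>U' \<subseteq> U\<close> by auto
    have "Phi (g (s *\<^sub>R v)) = s *\<^sub>R v" using hom sV[OF s] by (metis homeomorphism_apply2)
    then have "As (F (g (s *\<^sub>R v))) + P (g (s *\<^sub>R v) - y0) = s *\<^sub>R v" by (simp add: Phi_def)
    moreover have "s *\<^sub>R v \<in> K" using subspace_scale[OF subK vK] .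
    moreover have "F (g (s *\<^sub>R v)) \<in> L" using FL gs \<open>U' \<subseteq> U\<close> by auto
    ultimately show "F (g (s *\<^sub>R v)) = 0" by (rule cancel)
  next
    have V0: "0 \<in> V" using \<open>Phi y0 \<in> V\<close> Phi0 by simp
    have d1: "((\<lambda>s. s *\<^sub>R v) has_derivative (\<lambda>s. s *\<^sub>R v)) (at 0)"
      by (intro derivative_eq_intros) auto
    have "((\<lambda>s. g (s *\<^sub>R v)) has_derivative (\<lambda>s. g' 0 (s *\<^sub>R v))) (at 0)"
      using has_derivative_compose[OF d1, of g "g' 0"] gd[OF V0] by simp
    moreover have "linear (g' 0)" using gd[OF V0] has_derivative_linear by blast
    moreover have "g' 0 v = v"
    proof -
      have "blinfun_apply (Phi' (g 0)) v = v" using g0 Phi'_y0 D0_K[OF vK] by simp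
      moreover have "inj (blinfun_apply (Phi' (g 0)))" using bij[OF V0] bij_is_inj by blast
      ultimately show ?thesis using g'[OF V0] by (metis inv_f_f)
    qed
    ultimately have "((\<lambda>s. g (s *\<^sub>R v)) has_derivative (\<lambda>s. s *\<^sub>R v)) (at 0)"
      by (simp add: linear_scale)
    then show "((\<lambda>s. g (s *\<^sub>R v)) has_vector_derivative v) (at 0)"
      by (simp add: has_vector_derivative_def)
  qed
qed


lemma lsc:
  assumes ys: "ys \<longlonglongrightarrow> y0" and At: "blinfun_apply (F' y0) t = 0"
  shows "\<exists>ts. (\<forall>\<^sub>F n in sequentially. blinfun_apply (F' (ys n)) (ts n) = 0) \<and> ts \<longlonglongrightarrow> t"
proof -
  define D0 where "D0 = blinfun_apply (Phi' y0)"
  obtain c where c: "c > 0" "\<And>u. c * norm u \<le> norm (D0 u)"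
    using linear_inj_bounded_below_pos[OF linear_blinfun_apply D0_injective] unfolding D0_def by blast
  obtain B where B: "B > 0" "\<And>w. norm (As w) \<le> B * norm w"
    using linear_bounded_pos[OF linAs] by blast
  define eps where "eps n = B * norm (F' (ys n) - F' y0)" for n
  have evU: "\<forall>\<^sub>F n in sequentially. ys n \<in> U" using ys U y0 by (auto dest: topological_tendstoD)
  have "(\<lambda>n. F' (ys n)) \<longlonglongrightarrow> F' y0"
    by (rule continuous_on_tendsto_compose[OF Fc ys y0 evU])
  then have "(\<lambda>n. F' (ys n) - F' y0) \<longlonglongrightarrow> 0" by (simp add: LIM_zero)
  then have "(\<lambda>n. norm (F' (ys n) - F' y0)) \<longlonglongrightarrow> 0" by (simp add: tendsto_norm_zero)
  then have eps0: "eps \<longlonglongrightarrow> 0" unfolding eps_def using tendsto_mult_right_zero by blast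
  have close: "norm (blinfun_apply (Phi' (ys n)) u - D0 u) \<le> eps n * norm u" for n u
  proof -
    have "blinfun_apply (Phi' (ys n)) u - D0 u = As (blinfun_apply (F' (ys n) - F' y0) u)"
      by (simp add: D0_def Phi'_apply linear_diff[OF linAs] blinfun.diff_left)
    also have "norm \<dots> \<le> B * norm (blinfun_apply (F' (ys n) - F' y0) u)" by (rule B(2))
    also have "\<dots> \<le> B * (norm (F' (ys n) - F' y0) * norm u)"
      using B(1) norm_blinfun by (intro mult_left_mono) auto
    finally show ?thesis by (simp add: eps_def mult.assoc)
  qed
  have evc: "\<forall>\<^sub>F n in sequentially. eps n < c/2" using eps0 c(1)
    by (auto dest: order_tendstoD(2)[where a="c/2"])
  have tK: "t \<in> K" using At by (simp add: K_def A_def)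
  have D0t: "D0 t = t" using D0_K[OF tK] by (simp add: D0_def Phi'_y0)
  have solv: "\<exists>u. blinfun_apply (Phi' (ys n)) u = t" if en: "eps n < c/2" for n
  proof -
    have "inj (blinfun_apply (Phi' (ys n)))"
    proof (subst linear_injective_0[OF linear_blinfun_apply], intro allI impI)
      fix u assume u0: "blinfun_apply (Phi' (ys n)) u = 0"
      have "c * norm u \<le> norm (D0 u)" by (rule c(2))
      also have "\<dots> = norm (blinfun_apply (Phi' (ys n)) u - D0 u)" using u0 by simp
      also have "\<dots> \<le> eps n * norm u" by (rule close)
      finally have "(c - eps n) * norm u \<le> 0" by (simp add: algebra_simps)
      moreover have "c - eps n > 0" using en c by simp
      ultimately show "u = 0" by (simp add: mult_le_0_iff)
    qed
    then have "surj (blinfun_apply (Phi' (ys n)))"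
      by (rule linear_injective_imp_surjective[OF linear_blinfun_apply]) simp
    then show ?thesis by (metis surjD)
  qed
  define ts where "ts n = (if eps n < c/2 then (SOME u. blinfun_apply (Phi' (ys n)) u = t) else t)" for n
  have tsD: "blinfun_apply (Phi' (ys n)) (ts n) = t" if "eps n < c/2" for n
    using someI_ex[OF solv[OF that]] that by (simp add: ts_def)
  show ?thesis
  proof (intro exI conjI)
    show "\<forall>\<^sub>F n in sequentially. blinfun_apply (F' (ys n)) (ts n) = 0"
      using evc evU
    proof eventually_elim
      case (elim n)
      have "As (blinfun_apply (F' (ys n)) (ts n)) + P (ts n) = t" using tsD[OF elim(1)] by (simp add: Phi'_apply)
      moreover have "blinfun_apply (F' (ys n)) (ts n) \<in> L" using Fr[OF elim(2)] by auto
      ultimately show ?case using tK by (intro cancel)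
    qed
    have "(\<lambda>n. ts n - t) \<longlonglongrightarrow> 0"
    proof (rule Lim_null_comparison)
      show "\<forall>\<^sub>F n in sequentially. norm (ts n - t) \<le> 2 * eps n * norm t / c"
        using evc
      proof eventually_elim
        case (elim n)
        have "c * norm (ts n - t) \<le> norm (D0 (ts n - t))" by (rule c(2))
        also have "D0 (ts n - t) = D0 (ts n) - t" using D0t by (simp add: D0_def blinfun.diff_right)
        also have "\<dots> = - (blinfun_apply (Phi' (ys n)) (ts n) - D0 (ts n))" using tsD[OF elim] by simp
        also have "norm \<dots> \<le> eps n * norm (ts n)" unfolding norm_minus_cancel by (rule close)
        also have "\<dots> \<le> eps n * (norm (ts n - t) + norm t)"
        proof -
          have "eps n \<ge> 0" using B(1) by (simp add: eps_def)
          moreover have "norm (ts n) \<le> norm (ts n - t) + norm t" using norm_triangle_ineq[of "ts n - t" t] by simp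
          ultimately show ?thesis by (rule mult_left_mono[rotated])
        qed
        finally have "(c - eps n) * norm (ts n - t) \<le> eps n * norm t" by (simp add: algebra_simps)
        moreover have "c / 2 * norm (ts n - t) \<le> (c - eps n) * norm (ts n - t)"
          using elim by (intro mult_right_mono) auto
        ultimately have "c / 2 * norm (ts n - t) \<le> eps n * norm t" by linarith
        then show ?case using c(1) by (simp add: field_simps)
      qed
      show "(\<lambda>n. 2 * eps n * norm t / c) \<longlonglongrightarrow> 0"
        using eps0 c(1) by (auto intro!: tendsto_eq_intros)
    qed
    then show "ts \<longlonglongrightarrow> t" by (rule LIM_zero_cancel)
  qed
qed

end

lemma tangent_ker:
  assumes MU: "M \<inter> U = {y\<in>U. F y = 0}" and y: "y \<in> M" "y \<in> U"
  shows "tangent_space M y = {v. blinfun_apply (F' y) v = 0}"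
proof
  show "tangent_space M y \<subseteq> {v. blinfun_apply (F' y) v = 0}"
  proof
    fix v assume v: "v \<in> tangent_space M y"
    define w where "w = blinfun_apply (F' y) v"
    define D where "D = adjoint (blinfun_apply (F' y)) w"
    have hd: "((\<lambda>u. w \<bullet> F u) has_derivative (\<lambda>u. D \<bullet> u)) (at y)"
    proof -
      have "((\<lambda>u. w \<bullet> F u) has_derivative (\<lambda>u. w \<bullet> blinfun_apply (F' y) u)) (at y)"
        by (rule bounded_linear.has_derivative[OF bounded_linear_inner_right Fd[OF y(2)]])
      then show ?thesis
        by (rule has_derivative_eq_rhs) (simp add: D_def fun_eq_iff adjoint_clauses(2)[OF linear_blinfun_apply])
    qed
    have Fy0: "F y = 0" using MU y by blast
    have mn: "\<forall>u\<in>M \<inter> U. w \<bullet> F y \<le> w \<bullet> F u" using MU Fy0 by auto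
    have "D \<bullet> v = 0" by (rule fermat_tangent[OF v U y(2) hd mn])
    then have "w \<bullet> w = 0" by (simp add: D_def w_def adjoint_clauses(2)[OF linear_blinfun_apply])
    then show "v \<in> {v. blinfun_apply (F' y) v = 0}" by (simp add: w_def)
  qed
next
  show "{v. blinfun_apply (F' y) v = 0} \<subseteq> tangent_space M y"
  proof
    fix v assume "v \<in> {v. blinfun_apply (F' y) v = 0}"
    then have Av: "blinfun_apply (F' y) v = 0" by simp
    have Fy: "F y = 0" using MU y by auto
    obtain \<gamma> e where "e > 0" "\<gamma> 0 = y" and gs: "\<forall>s. \<bar>s\<bar> < e \<longrightarrow> \<gamma> s \<in> U \<and> F (\<gamma> s) = 0"
      and "(\<gamma> has_vector_derivative v) (at 0)"
      using curve[OF y(2) Fy Av] by blast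
    moreover have "\<forall>s. \<bar>s\<bar> < e \<longrightarrow> \<gamma> s \<in> M" using gs MU by blast
    ultimately show "v \<in> tangent_space M y" unfolding tangent_space_def by blast
  qed
qed

end

lemma csub_convex: "convex (csub f x)"
proof (rule convexI)
  fix a b :: 'a and u v :: real
  assume A: "a \<in> csub f x" and B: "b \<in> csub f x" and uv: "0 \<le> u" "0 \<le> v" "u + v = 1"
  have fx: "\<bar>f x\<bar> \<noteq> \<infinity>" using A by (simp add: csub_def)
  have a: "\<forall>y. f x + ereal (a \<bullet> (y - x)) \<le> f y" using A by (simp add: csub_def)
  have b: "\<forall>y. f x + ereal (b \<bullet> (y - x)) \<le> f y" using B by (simp add: csub_def)
  obtain c where c: "f x = ereal c" using fx by (cases "f x") auto
  have "f x + ereal ((u *\<^sub>R a + v *\<^sub>R b) \<bullet> (y - x)) \<le> f y" for y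
  proof (cases "f y")
    case (real d)
    have "c + a \<bullet> (y - x) \<le> d" "c + b \<bullet> (y - x) \<le> d"
      using a[rule_format, of y] b[rule_format, of y] c real by auto
    then have "u * (c + a \<bullet> (y - x)) + v * (c + b \<bullet> (y - x)) \<le> u * d + v * d"
      using uv by (intro add_mono mult_left_mono) auto
    moreover have "c + (u *\<^sub>R a + v *\<^sub>R b) \<bullet> (y - x) = u * (c + a \<bullet> (y - x)) + v * (c + b \<bullet> (y - x))"
    proof -
      have v: "v = 1 - u" using uv(3) by simp
      show ?thesis unfolding v by (simp add: inner_add_left algebra_simps)
    qed
    moreover have "u * d + v * d = d" using uv(3) by (metis distrib_right mult_1)
    ultimately have "c + (u *\<^sub>R a + v *\<^sub>R b) \<bullet> (y - x) \<le> d" by linarith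
    then show ?thesis using c real by simp
  next
    case PInf then show ?thesis by simp
  next
    case MInf then show ?thesis using a[rule_format, of y] c by simp
  qed
  then show "u *\<^sub>R a + v *\<^sub>R b \<in> csub f x" using fx by (simp add: csub_def)
qed

lemma csub_closed: "closed (csub f x)"
proof (cases "\<bar>f x\<bar> = \<infinity>")
  case True then show ?thesis by (simp add: csub_def)
next
  case False
  then obtain c where c: "f x = ereal c" by (cases "f x") auto
  have "csub f x = (\<Inter>y. {v. f x + ereal (v \<bullet> (y - x)) \<le> f y})" using False by (auto simp: csub_def)
  moreover have "closed {v. f x + ereal (v \<bullet> (y - x)) \<le> f y}" for y
  proof (cases "f y")
    case (real d)
    have "{v. f x + ereal (v \<bullet> (y - x)) \<le> f y} = {v. v \<bullet> (y - x) \<le> d - c}" using c real by auto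
    then show ?thesis by (simp add: closed_Collect_le continuous_on_inner continuous_on_id continuous_on_const)
  next
    case PInf then show ?thesis by simp
  next
    case MInf
    have "{v. f x + ereal (v \<bullet> (y - x)) \<le> f y} = {}" using c MInf by auto
    then show ?thesis by simp
  qed
  ultimately show ?thesis by auto
qed

locale setting = chart U L F F' for U :: "'a::euclidean_space set" and L F F' +
  fixes f :: "'a \<Rightarrow> ereal" and M xb g g'
  assumes pf: "proper_fun f" and cf: "convex_fun f" and clf: "closed_fun f"
    and xbS: "xb \<in> argmin_set f" and xbM: "xb \<in> M" and xbU: "xb \<in> U"
    and MU: "M \<inter> U = {y\<in>U. F y = 0}"
    and ext: "local_smooth_ext f M xb U g g'"
    and reg: "\<And>z. z \<in> M \<Longrightarrow> z \<in> U \<Longrightarrow> subdiff f z \<noteq> {}"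
    and ps: "partly_smooth_at f M xb"
    and ri: "0 \<in> rel_interior (subdiff f xb)"
begin

abbreviation "S \<equiv> argmin_set f"
abbreviation "T y \<equiv> tangent_space M y"

lemma gd: "y \<in> U \<Longrightarrow> (g has_derivative (\<lambda>h. g' y \<bullet> h)) (at y)"
  using ext by (auto simp: local_smooth_ext_def C1_on_with_grad_def)
lemma g'c: "continuous_on U g'"
  using ext by (auto simp: local_smooth_ext_def C1_on_with_grad_def)
lemma gcont: "continuous_on U g"
  using gd by (intro has_derivative_continuous_on) (auto intro: has_derivative_at_withinI)
lemma fg: "y \<in> M \<Longrightarrow> y \<in> U \<Longrightarrow> f y = ereal (g y)"
  using ext by (auto simp: local_smooth_ext_def)
lemma fxb: "f xb = ereal (g xb)" using fg xbM xbU .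
lemma fmin: "f xb \<le> f y" using xbS by (simp add: argmin_set_def)
lemma gmin: "y \<in> M \<Longrightarrow> y \<in> U \<Longrightarrow> g xb \<le> g y"
  using fmin[of y] fg[of y] fxb by simp
lemma sub_eq: "subdiff f x = csub f x" using subdiff_csub[OF cf pf] .

lemma Sdef: "S = {x. f x \<le> ereal (g xb)}"
proof (intro set_eqI iffI)
  fix x assume "x \<in> S"
  then show "x \<in> {x. f x \<le> ereal (g xb)}" using fxb unfolding argmin_set_def by (metis mem_Collect_eq)
next
  fix x assume "x \<in> {x. f x \<le> ereal (g xb)}"
  then have "f x \<le> f y" for y using fmin[of y] fxb by simp
  then show "x \<in> S" by (simp add: argmin_set_def)
qed

lemma S_closed: "closed S"
proof -
  have "S = (\<lambda>x. (x, g xb)) -` epigraph f" by (auto simp: Sdef epigraph_def)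
  moreover have "closed ((\<lambda>x. (x, g xb)) -` epigraph f)"
    using clf unfolding closed_fun_def
    by (intro continuous_closed_vimage) (auto intro!: continuous_intros)
  ultimately show ?thesis by simp
qed

lemma S_f: "p \<in> S \<Longrightarrow> f p = ereal (g xb)"
  using fmin[of p] fxb unfolding Sdef by simp

lemma T_ker: "y \<in> M \<Longrightarrow> y \<in> U \<Longrightarrow> T y = {v. blinfun_apply (F' y) v = 0}"
  using tangent_ker[OF MU] .
lemma T_sub: "y \<in> M \<Longrightarrow> y \<in> U \<Longrightarrow> subspace (T y)"
  using T_ker linear_subspace_kernel[OF linear_blinfun_apply] by simp

lemma rg_eq:
  assumes y: "y \<in> M" "y \<in> U"
  shows "riem_grad f M y = closest_point (T y) (g' y)"
proof -
  have ex: "\<exists>w. \<exists>U g g'. local_smooth_ext f M y U g g' \<and> w = closest_point (T y) (g' y)"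
    using ext y unfolding local_smooth_ext_def by blast
  from someI_ex[OF ex] obtain U2 g2 g2' where e2: "local_smooth_ext f M y U2 g2 g2'"
    and rg: "riem_grad f M y = closest_point (T y) (g2' y)"
    unfolding riem_grad_def by blast
  have sub: "subspace (T y)" using T_sub y .
  have orth: "(g' y - g2' y) \<bullet> t = 0" if t: "t \<in> T y" for t
  proof -
    have W: "open (U \<inter> U2)" "y \<in> U \<inter> U2" using U e2 y by (auto simp: local_smooth_ext_def)
    have d2: "(g2 has_derivative (\<lambda>h. g2' y \<bullet> h)) (at y)"
      using e2 by (auto simp: local_smooth_ext_def C1_on_with_grad_def)
    have hd: "((\<lambda>u. g u - g2 u) has_derivative (\<lambda>h. (g' y - g2' y) \<bullet> h)) (at y)"
      using has_derivative_diff[OF gd[OF y(2)] d2] by (simp add: inner_diff_left)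
    have eq: "g v = g2 v" if "v \<in> M" "v \<in> U" "v \<in> U2" for v
      using e2 fg[OF that(1,2)] that unfolding local_smooth_ext_def by auto
    have "\<forall>u\<in>M \<inter> (U \<inter> U2). g y - g2 y \<le> g u - g2 u"
      using eq W(2) y by auto
    then show ?thesis using fermat_tangent[OF t W hd] by simp
  qed
  have "closest_point (T y) (g' y) = closest_point (T y) (g2' y)"
  proof (rule cp_subspace_unique[OF sub cp_subspace(1)[OF sub]])
    fix t assume t: "t \<in> T y"
    have "(g' y - closest_point (T y) (g2' y)) \<bullet> t = (g' y - g2' y) \<bullet> t + (g2' y - closest_point (T y) (g2' y)) \<bullet> t"
      by (simp add: inner_diff_left)
    then show "(g' y - closest_point (T y) (g2' y)) \<bullet> t = 0"
      using orth[OF t] cp_subspace(2)[OF sub t] by simp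
  qed
  then show ?thesis using rg by simp
qed

lemma rg_T: "y \<in> M \<Longrightarrow> y \<in> U \<Longrightarrow> riem_grad f M y \<in> T y"
  using rg_eq cp_subspace(1)[OF T_sub] by simp
lemma rg_orth: "y \<in> M \<Longrightarrow> y \<in> U \<Longrightarrow> t \<in> T y \<Longrightarrow> (g' y - riem_grad f M y) \<bullet> t = 0"
  using rg_eq cp_subspace(2)[OF T_sub] by simp

lemma rg_tan: "y \<in> M \<Longrightarrow> y \<in> U \<Longrightarrow> t \<in> T y \<Longrightarrow> riem_grad f M y \<bullet> t = g' y \<bullet> t"
  using rg_orth[of y t] by (simp add: inner_diff_left)

lemma sg_orth:
  assumes y: "y \<in> M" "y \<in> U" and q: "q \<in> subdiff f y" and t: "t \<in> T y"
  shows "(g' y - q) \<bullet> t = 0"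
proof -
  have hd: "((\<lambda>u. g u - q \<bullet> u) has_derivative (\<lambda>h. (g' y - q) \<bullet> h)) (at y)"
    using has_derivative_diff[OF gd[OF y(2)] bounded_linear.has_derivative[OF bounded_linear_inner_right has_derivative_ident]]
    by (simp add: inner_diff_left)
  have "g y - q \<bullet> y \<le> g u - q \<bullet> u" if u: "u \<in> M \<inter> U" for u
  proof -
    have "f y + ereal (q \<bullet> (u - y)) \<le> f u" using q by (simp add: sub_eq csub_def)
    then have "g y + q \<bullet> (u - y) \<le> g u" using fg y u by simp
    then show ?thesis by (simp add: inner_diff_right)
  qed
  then show ?thesis using fermat_tangent[OF t U y(2) hd] by blast
qed

lemma sg_rg_orth:
  assumes y: "y \<in> M" "y \<in> U" and q: "q \<in> subdiff f y" and t: "t \<in> T y"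
  shows "(riem_grad f M y - q) \<bullet> t = 0"
  using sg_orth[OF assms] rg_orth[OF y t] by (simp add: inner_diff_left)

lemma fermat_qg:
  assumes y: "y \<in> M" "y \<in> U" and W: "open W" "W \<subseteq> U" "y \<in> W"
    and mn: "\<forall>u\<in>M \<inter> W. g y + \<beta> * ((y - x) \<bullet> (y - x)) \<le> g u + \<beta> * ((u - x) \<bullet> (u - x))"
    and that: "\<beta> \<ge> 0"
  shows "norm (riem_grad f M y) \<le> 2 * \<beta> * norm (y - x)"
proof -
  have hd: "((\<lambda>u. g u + \<beta> * ((u - x) \<bullet> (u - x))) has_derivative (\<lambda>h. (g' y + (2 * \<beta>) *\<^sub>R (y - x)) \<bullet> h)) (at y)"
  proof -
    have "((\<lambda>u. (u - x) \<bullet> (u - x)) has_derivative (\<lambda>h. h \<bullet> (y - x) + (y - x) \<bullet> h)) (at y)"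
      by (rule has_derivative_eq_rhs, (rule derivative_intros)+) (auto simp: fun_eq_iff inner_commute)
    from has_derivative_add[OF gd[OF y(2)] has_derivative_mult_right[OF this, of \<beta>]]
    show ?thesis by (rule has_derivative_eq_rhs) (auto simp: fun_eq_iff inner_add_left inner_commute algebra_simps)
  qed
  define p where "p = riem_grad f M y"
  have pT: "p \<in> T y" using rg_T[OF y] by (simp only: p_def)
  have "(g' y + (2 * \<beta>) *\<^sub>R (y - x)) \<bullet> p = 0"
    by (rule fermat_tangent[OF pT W(1,3) hd]) (use mn in simp)
  then have E: "g' y \<bullet> p + (2 * \<beta>) * ((y - x) \<bullet> p) = 0"
    by (simp only: inner_add_left inner_scaleR_left)
  have "p \<bullet> p = g' y \<bullet> p" using rg_tan[OF y pT] by (simp only: p_def)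
  with E have "p \<bullet> p = - (2 * \<beta>) * ((y - x) \<bullet> p)" by linarith
  also have "\<dots> \<le> 2 * \<beta> * (norm (y - x) * norm p)"
  proof -
    have cs0: "\<bar>(y - x) \<bullet> p\<bar> \<le> norm (y - x) * norm p" by (rule Cauchy_Schwarz_ineq2)
    have cs: "- ((y - x) \<bullet> p) \<le> norm (y - x) * norm p" using cs0 by linarith
    have b2: "0 \<le> 2 * \<beta>" using that by simp
    have "2 * \<beta> * (- ((y - x) \<bullet> p)) \<le> 2 * \<beta> * (norm (y - x) * norm p)"
      by (rule mult_left_mono[OF cs b2])
    moreover have "- (2 * \<beta>) * ((y - x) \<bullet> p) = 2 * \<beta> * (- ((y - x) \<bullet> p))" by simp
    ultimately show ?thesis by linarith
  qed
  finally have pp: "p \<bullet> p \<le> 2 * \<beta> * (norm (y - x) * norm p)" .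
  have "norm p * norm p = p \<bullet> p" using power2_norm_eq_inner[of p] by (simp only: power2_eq_square)
  with pp have pp2: "norm p * norm p \<le> (2 * \<beta> * norm (y - x)) * norm p" by (simp add: mult.assoc)
  have "norm p \<le> 2 * \<beta> * norm (y - x)"
  proof (cases "norm p = 0")
    case True then show ?thesis using that by simp
  next
    case False then have "norm p > 0" by simp
    then show ?thesis using mult_right_le_imp_le[OF pp2] by simp
  qed
  then show ?thesis by (simp only: p_def)
qed

lemma near_orth:
  assumes z: "z \<in> M" "z \<in> U" and W: "open W" "z \<in> W"
    and mn: "\<forall>u\<in>M \<inter> W. dist x z \<le> dist x u" and t: "t \<in> T z"
  shows "(x - z) \<bullet> t = 0"
proof -
  have hd: "((\<lambda>u. (u - x) \<bullet> (u - x)) has_derivative (\<lambda>h. (2 *\<^sub>R (z - x)) \<bullet> h)) (at z)"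
    by (rule has_derivative_eq_rhs, (rule derivative_intros)+) (auto simp: fun_eq_iff inner_commute inner_add_left)
  have "\<forall>u\<in>M \<inter> W. (z - x) \<bullet> (z - x) \<le> (u - x) \<bullet> (u - x)"
  proof
    fix u assume "u \<in> M \<inter> W"
    then have "dist x z \<le> dist x u" using mn by blast
    then have "(dist x z)^2 \<le> (dist x u)^2" by (simp add: power_mono)
    moreover have "(z - x) \<bullet> (z - x) = (dist x z)^2"
      by (simp only: dist_norm power2_norm_eq_inner[symmetric] norm_minus_commute)
    moreover have "(u - x) \<bullet> (u - x) = (dist x u)^2"
      by (simp only: dist_norm power2_norm_eq_inner[symmetric] norm_minus_commute)
    ultimately show "(z - x) \<bullet> (z - x) \<le> (u - x) \<bullet> (u - x)" by simp
  qed
  then have "(2 *\<^sub>R (z - x)) \<bullet> t = 0" by (rule fermat_tangent[OF t W hd, rotated])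
  then show ?thesis by (simp add: inner_diff_left)
qed

end

context setting begin

lemma ri_ball: "\<exists>\<rho>>0. \<forall>w. w \<in> normal_space M xb \<and> norm w \<le> \<rho> \<longrightarrow> w \<in> subdiff f xb"
proof -
  let ?C = "subdiff f xb"
  have "0 \<in> ?C \<and> (\<exists>e>0. ball 0 e \<inter> affine hull ?C \<subseteq> ?C)"
    using ri by (simp only: mem_rel_interior_ball)
  then obtain e where e: "e > 0" and sub: "ball 0 e \<inter> affine hull ?C \<subseteq> ?C" and C0: "0 \<in> ?C"
    by blast
  have ah: "affine hull ?C = span ?C"
    by (rule affine_hull_span_0[OF hull_inc[OF C0]])
  have "par ?C \<subseteq> span ?C" unfolding par_def
  proof (rule span_minimal)
    show "{a - b |a b. a \<in> ?C \<and> b \<in> ?C} \<subseteq> span ?C" by (auto intro: span_diff span_base)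
  qed (rule subspace_span)
  moreover have "par ?C = normal_space M xb" using ps by (simp add: partly_smooth_at_def)
  ultimately have N: "normal_space M xb \<subseteq> affine hull ?C" using ah by simp
  show ?thesis
  proof (intro exI[of _ "e/2"] conjI allI impI)
    show "e / 2 > 0" using e by simp
    fix w assume w: "w \<in> normal_space M xb \<and> norm w \<le> e / 2"
    then have "w \<in> ball 0 e" using e by simp
    moreover have "w \<in> affine hull ?C" using N w by blast
    ultimately show "w \<in> ?C" using sub by blast
  qed
qed

lemma T_lsc:
  assumes zs: "\<And>n. zs n \<in> M" "zs \<longlonglongrightarrow> xb" and t: "t \<in> T xb"
  shows "\<exists>ts. (\<forall>\<^sub>F n in sequentially. ts n \<in> T (zs n)) \<and> ts \<longlonglongrightarrow> t"
proof -
  have evU: "\<forall>\<^sub>F n in sequentially. zs n \<in> U" using zs(2) U xbU by (auto dest: topological_tendstoD)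
  have "blinfun_apply (F' xb) t = 0" using t T_ker[OF xbM xbU] by simp
  then obtain ts where ev: "\<forall>\<^sub>F n in sequentially. blinfun_apply (F' (zs n)) (ts n) = 0" and lim: "ts \<longlonglongrightarrow> t"
    using lsc[OF xbU zs(2)] by blast
  have "\<forall>\<^sub>F n in sequentially. ts n \<in> T (zs n)"
    using ev evU by eventually_elim (use T_ker zs(1) in auto)
  then show ?thesis using lim by blast
qed

lemma sep:
  assumes z: "z \<in> M" "z \<in> U" and v: "\<forall>t\<in>T z. v \<bullet> t = 0" and nin: "riem_grad f M z + v \<notin> subdiff f z"
  shows "\<exists>a. norm a = 1 \<and> (\<forall>t\<in>T z. a \<bullet> t = 0) \<and> (\<forall>q\<in>subdiff f z. a \<bullet> q < norm v)"
proof -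
  let ?C = "subdiff f z"
  let ?u = "riem_grad f M z + v"
  have sub: "subspace (T z)" using T_sub[OF z] .
  have cv: "convex ?C" "closed ?C" using csub_convex csub_closed by (simp_all add: sub_eq)
  obtain a b where ab: "a \<bullet> ?u < b" "\<And>x. x \<in> ?C \<Longrightarrow> b < a \<bullet> x"
    using separating_hyperplane_closed_point[OF cv nin] by blast
  define a' where "a' = a - closest_point (T z) a"
  have a'N: "a' \<bullet> t = 0" if "t \<in> T z" for t using cp_subspace(2)[OF sub that] by (simp add: a'_def)
  have uqN: "(?u - q) \<bullet> t = 0" if q: "q \<in> ?C" and t: "t \<in> T z" for q t
    using sg_rg_orth[OF z q t] v t by (simp add: inner_diff_left inner_add_left algebra_simps)
  have key: "a' \<bullet> (?u - q) < 0" if q: "q \<in> ?C" for q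
  proof -
    have "a \<bullet> (?u - q) = a' \<bullet> (?u - q) + closest_point (T z) a \<bullet> (?u - q)"
      by (simp add: a'_def inner_diff_left)
    also have "closest_point (T z) a \<bullet> (?u - q) = 0"
      using uqN[OF q cp_subspace(1)[OF sub]] by (simp add: inner_commute)
    finally have "a \<bullet> (?u - q) = a' \<bullet> (?u - q)" by simp
    moreover have "a \<bullet> (?u - q) < 0" using ab(1) ab(2)[OF q] by (simp add: inner_diff_right)
    ultimately show ?thesis by simp
  qed
  obtain q0 where q0: "q0 \<in> ?C" using reg[OF z] by blast
  have a'0: "a' \<noteq> 0" using key[OF q0] by auto
  define ah where "ah = - ((1 / norm a') *\<^sub>R a')"
  have nah: "norm ah = 1" using a'0 by (simp add: ah_def)
  have ahN: "ah \<bullet> t = 0" if "t \<in> T z" for t using a'N[OF that] by (simp add: ah_def)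
  show ?thesis
  proof (intro exI[of _ ah] conjI ballI)
    show "norm ah = 1" by fact
    fix t assume "t \<in> T z" then show "ah \<bullet> t = 0" by (rule ahN)
  next
    fix q assume q: "q \<in> ?C"
    have "ah \<bullet> (?u - q) = - (1 / norm a') * (a' \<bullet> (?u - q))" by (simp add: ah_def)
    moreover have "- (1 / norm a') * (a' \<bullet> (?u - q)) > 0"
      using key[OF q] a'0 by (simp add: divide_neg_pos)
    ultimately have "ah \<bullet> q < ah \<bullet> ?u" by (simp add: inner_diff_right)
    also have "ah \<bullet> ?u = ah \<bullet> v" using ahN[OF rg_T[OF z]] by (simp add: inner_add_right)
    also have "\<dots> \<le> norm ah * norm v" by (rule norm_cauchy_schwarz)
    finally show "ah \<bullet> q < norm v" using nah by simp
  qed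
qed


lemma K_lemma:
  "\<exists>r>0. \<exists>\<delta>>0. ball xb \<delta> \<subseteq> U \<and> (\<forall>z v. z \<in> M \<and> dist z xb < \<delta> \<and> (\<forall>t\<in>T z. v \<bullet> t = 0) \<and> norm v \<le> r
      \<longrightarrow> riem_grad f M z + v \<in> subdiff f z)"
proof (rule ccontr)
  obtain dU where dU: "dU > 0" "ball xb dU \<subseteq> U" using U xbU open_contains_ball by blast
  define eps :: "nat \<Rightarrow> real" where "eps n = inverse (real (Suc n))" for n
  have eps0: "eps \<longlonglongrightarrow> 0" unfolding eps_def by (rule LIMSEQ_inverse_real_of_nat)
  have epspos: "eps n > 0" for n by (simp add: eps_def)
  assume contra: "\<not> ?thesis"
  have "\<exists>z v. z \<in> M \<and> dist z xb < min dU (eps n) \<and> (\<forall>t\<in>T z. v \<bullet> t = 0) \<and> norm v \<le> eps n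
      \<and> riem_grad f M z + v \<notin> subdiff f z" for n
  proof -
    have "min dU (eps n) > 0" using dU epspos[of n] by simp
    moreover have "ball xb (min dU (eps n)) \<subseteq> U" using dU by auto
    ultimately show ?thesis using contra epspos[of n] by blast
  qed
  then obtain zs vs where zv: "\<And>n. zs n \<in> M" "\<And>n. dist (zs n) xb < min dU (eps n)"
      "\<And>n. \<forall>t\<in>T (zs n). vs n \<bullet> t = 0" "\<And>n. norm (vs n) \<le> eps n"
      "\<And>n. riem_grad f M (zs n) + vs n \<notin> subdiff f (zs n)"
    by metis
  have zU: "zs n \<in> U" for n using zv(2)[of n] dU by (auto simp: dist_commute)
  have "\<exists>a. norm a = 1 \<and> (\<forall>t\<in>T (zs n). a \<bullet> t = 0) \<and> (\<forall>q\<in>subdiff f (zs n). a \<bullet> q < norm (vs n))" for n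
    by (rule sep[OF zv(1) zU zv(3) zv(5)])
  then obtain as where as: "\<And>n. norm (as n) = 1" "\<And>n. \<forall>t\<in>T (zs n). as n \<bullet> t = 0"
      "\<And>n. \<forall>q\<in>subdiff f (zs n). as n \<bullet> q < norm (vs n)"
    by metis
  have "seq_compact (sphere (0::'a) 1)" by (rule compact_imp_seq_compact[OF compact_sphere])
  moreover have "\<forall>n. as n \<in> sphere 0 1" using as(1) by simp
  ultimately obtain l \<sigma> where l: "l \<in> sphere 0 1" and \<sigma>: "strict_mono \<sigma>" and asl: "(as \<circ> \<sigma>) \<longlonglongrightarrow> l"
    by (rule seq_compactE)
  have zlim: "zs \<longlonglongrightarrow> xb"
  proof -
    have "(\<lambda>n. zs n - xb) \<longlonglongrightarrow> 0"
    proof (rule Lim_null_comparison[OF _ eps0])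
      show "\<forall>\<^sub>F n in sequentially. norm (zs n - xb) \<le> eps n"
        using zv(2) by (auto simp: dist_norm intro!: always_eventually less_imp_le)
    qed
    then show ?thesis by (rule LIM_zero_cancel)
  qed
  define zt where "zt = zs \<circ> \<sigma>"
  have ztM: "\<And>k. zt k \<in> M" using zv(1) by (simp add: zt_def)
  have ztlim: "zt \<longlonglongrightarrow> xb" unfolding zt_def by (rule LIMSEQ_subseq_LIMSEQ[OF zlim \<sigma>])
  have lN: "l \<in> normal_space M xb"
    unfolding normal_space_def
  proof (intro CollectI ballI)
    fix t assume t: "t \<in> T xb"
    obtain ts where ts: "\<forall>\<^sub>F k in sequentially. ts k \<in> T (zt k)" and tsl: "ts \<longlonglongrightarrow> t"
      using T_lsc[OF ztM ztlim t] by blast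
    have lim1: "(\<lambda>k. (as \<circ> \<sigma>) k \<bullet> ts k) \<longlonglongrightarrow> l \<bullet> t" by (intro tendsto_inner asl tsl)
    have "\<forall>\<^sub>F k in sequentially. 0 = (as \<circ> \<sigma>) k \<bullet> ts k"
      using ts by eventually_elim (use as(2) in \<open>auto simp: zt_def\<close>)
    then have "(\<lambda>k. (as \<circ> \<sigma>) k \<bullet> ts k) \<longlonglongrightarrow> 0" by (rule Lim_transform_eventually[OF tendsto_const])
    then show "l \<bullet> t = 0" using lim1 LIMSEQ_unique by blast
  qed
  obtain \<rho> where \<rho>: "\<rho> > 0" "\<And>w. w \<in> normal_space M xb \<Longrightarrow> norm w \<le> \<rho> \<Longrightarrow> w \<in> subdiff f xb"
    using ri_ball by blast
  define p where "p = \<rho> *\<^sub>R l"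
  have nl: "norm l = 1" using l by simp
  have pN: "p \<in> normal_space M xb" using lN by (simp add: p_def normal_space_def)
  have pC: "p \<in> subdiff f xb" using \<rho>(2)[OF pN] \<rho>(1) nl by (simp add: p_def)
  have "\<forall>y\<in>subdiff f xb. \<forall>xs. (\<forall>r. xs r \<in> M) \<and> xs \<longlonglongrightarrow> xb \<longrightarrow>
        (\<exists>ys. (\<forall>\<^sub>F r in sequentially. ys r \<in> subdiff f (xs r)) \<and> ys \<longlonglongrightarrow> y)"
    using ps by (simp add: partly_smooth_at_def)
  then obtain qs where qs: "\<forall>\<^sub>F k in sequentially. qs k \<in> subdiff f (zt k)" and qsl: "qs \<longlonglongrightarrow> p"
    using pC ztM ztlim by blast
  have lim2: "(\<lambda>k. (as \<circ> \<sigma>) k \<bullet> qs k) \<longlonglongrightarrow> l \<bullet> p" by (intro tendsto_inner asl qsl)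
  have le: "\<forall>\<^sub>F k in sequentially. (as \<circ> \<sigma>) k \<bullet> qs k \<le> eps k"
    using qs
  proof eventually_elim
    case (elim k)
    have "(as \<circ> \<sigma>) k \<bullet> qs k < norm (vs (\<sigma> k))" using as(3)[of "\<sigma> k"] elim by (simp add: zt_def)
    also have "\<dots> \<le> eps (\<sigma> k)" by (rule zv(4))
    also have "\<dots> \<le> eps k" unfolding eps_def using seq_suble[OF \<sigma>, of k]
      by (intro le_imp_inverse_le) auto
    finally show ?case by simp
  qed
  have "l \<bullet> p \<le> 0" by (rule tendsto_le[OF _ eps0 lim2 le]) simp
  moreover have "l \<bullet> p = \<rho>" using nl by (simp add: p_def power2_norm_eq_inner[symmetric])
  ultimately show False using \<rho>(1) by simp
qed

end

context setting begin

lemma Fcont: "continuous_on U F"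
  using Fd by (intro has_derivative_continuous_on) (auto intro: has_derivative_at_withinI)

lemma cball_M_closed:
  assumes "cball c d \<subseteq> U"
  shows "closed (M \<inter> cball c d)" "compact (M \<inter> cball c d)"
proof -
  have eq: "M \<inter> cball c d = {y \<in> cball c d. F y = 0}" using MU assms by blast
  have "closed {y \<in> cball c d. F y = 0}"
    by (rule continuous_closed_preimage_constant[OF continuous_on_subset[OF Fcont assms]]) simp
  then show cl: "closed (M \<inter> cball c d)" using eq by simp
  show "compact (M \<inter> cball c d)" unfolding compact_eq_bounded_closed
    using cl bounded_Int bounded_cball by blast
qed

lemma proj:
  "\<exists>\<delta>p>0. \<exists>r>0. \<forall>x. dist x xb < \<delta>p \<longrightarrow> x \<notin> M \<longrightarrow> (\<exists>z. z \<in> M \<and> z \<in> U \<and> dist z xb \<le> 2 * dist x xb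
      \<and> 0 < norm (x - z) \<and> norm (x - z) \<le> dist x xb \<and> f z + ereal (r * norm (x - z)) \<le> f x)"
proof -
  obtain r \<delta>K where r: "r > 0" and dK: "\<delta>K > 0" "ball xb \<delta>K \<subseteq> U"
    and K0: "\<forall>z v. z \<in> M \<and> dist z xb < \<delta>K \<and> (\<forall>t\<in>T z. v \<bullet> t = 0) \<and> norm v \<le> r
      \<longrightarrow> riem_grad f M z + v \<in> subdiff f z"
    using K_lemma by blast
  have K: "riem_grad f M z + v \<in> subdiff f z" if "z \<in> M" "dist z xb < \<delta>K" "\<forall>t\<in>T z. v \<bullet> t = 0" "norm v \<le> r" for z v
    using K0 that by blast
  obtain \<rho> where \<rho>: "\<rho> > 0" "cball xb \<rho> \<subseteq> U" using U xbU open_contains_cball by blast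
  define C where "C = M \<inter> cball xb \<rho>"
  have clC: "closed C" using cball_M_closed(1)[OF \<rho>(2)] by (simp add: C_def)
  have xbC: "xb \<in> C" using xbM \<rho>(1) by (simp add: C_def)
  define \<delta>p where "\<delta>p = min (\<rho>/2) (\<delta>K/2)"
  have dp0: "\<delta>p > 0" using \<rho> dK by (simp add: \<delta>p_def)
  have "\<forall>x. dist x xb < \<delta>p \<longrightarrow> x \<notin> M \<longrightarrow> (\<exists>z. z \<in> M \<and> z \<in> U \<and> dist z xb \<le> 2 * dist x xb
      \<and> 0 < norm (x - z) \<and> norm (x - z) \<le> dist x xb \<and> f z + ereal (r * norm (x - z)) \<le> f x)"
  proof (intro allI impI)
    fix x assume dx: "dist x xb < \<delta>p" and xM: "x \<notin> M"
    define z where "z = closest_point C x"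
    have zC: "z \<in> C" unfolding z_def using closest_point_in_set[OF clC] xbC by blast
    have zle: "dist x z \<le> dist x u" if "u \<in> C" for u unfolding z_def by (rule closest_point_le[OF clC that])
    have dxz: "dist x z \<le> dist x xb" using zle[OF xbC] .
    have dzxb: "dist z xb \<le> 2 * dist x xb"
      using dist_triangle[of z xb x] dxz by (simp add: dist_commute)
    have zM: "z \<in> M" using zC by (simp add: C_def)
    have zball: "z \<in> ball xb \<rho>" using dzxb dx by (simp add: \<delta>p_def dist_commute)
    have zU: "z \<in> U" using zball \<rho>(2) by auto
    have zK: "dist z xb < \<delta>K" using dzxb dx by (simp add: \<delta>p_def)
    define w where "w = x - z"
    have w0: "w \<noteq> 0" using xM zM by (auto simp: w_def)
    have wN: "w \<bullet> t = 0" if t: "t \<in> T z" for t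
    proof -
      have "\<forall>u\<in>M \<inter> ball xb \<rho>. dist x z \<le> dist x u" using zle by (auto simp: C_def)
      then show ?thesis unfolding w_def by (rule near_orth[OF zM zU open_ball zball _ t])
    qed
    define v where "v = (r / norm w) *\<^sub>R w"
    have vN: "\<forall>t\<in>T z. v \<bullet> t = 0" using wN by (simp add: v_def)
    have nv: "norm v = r" using w0 r by (simp add: v_def)
    have inC: "riem_grad f M z + v \<in> subdiff f z" using K[OF zM zK vN] nv by simp
    then have "f z + ereal ((riem_grad f M z + v) \<bullet> (x - z)) \<le> f x" by (simp add: sub_eq csub_def)
    moreover have "(riem_grad f M z + v) \<bullet> (x - z) = r * norm (x - z)"
    proof -
      have "riem_grad f M z \<bullet> w = 0" using wN[OF rg_T[OF zM zU]] by (simp add: inner_commute)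
      moreover have "v \<bullet> w = r * norm w"
        using w0 by (simp add: v_def power2_norm_eq_inner[symmetric] power2_eq_square)
      ultimately show ?thesis by (simp add: inner_add_left w_def)
    qed
    ultimately have "f z + ereal (r * norm (x - z)) \<le> f x" by simp
    then show "\<exists>z. z \<in> M \<and> z \<in> U \<and> dist z xb \<le> 2 * dist x xb \<and> 0 < norm (x - z) \<and> norm (x - z) \<le> dist x xb
      \<and> f z + ereal (r * norm (x - z)) \<le> f x"
      using zM zU dzxb w0 dxz by (auto simp: w_def dist_norm)
  qed
  then show ?thesis using dp0 r by blast
qed

lemma ident: "\<exists>\<delta>i>0. \<forall>x. dist x xb < \<delta>i \<longrightarrow> x \<in> S \<longrightarrow> x \<in> M"
proof -
  obtain \<delta>p r where dp: "\<delta>p > 0" and r: "r > 0" and P0: "\<forall>x. dist x xb < \<delta>p \<longrightarrow> x \<notin> M \<longrightarrow> (\<exists>z. z \<in> M \<and> z \<in> U \<and> dist z xb \<le> 2 * dist x xb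
      \<and> 0 < norm (x - z) \<and> norm (x - z) \<le> dist x xb \<and> f z + ereal (r * norm (x - z)) \<le> f x)"
    using proj by blast
  note P = P0[rule_format]
  show ?thesis
  proof (intro exI[of _ \<delta>p] conjI allI impI)
    show "\<delta>p > 0" by fact
    fix x assume dx: "dist x xb < \<delta>p" and xS: "x \<in> S"
    show "x \<in> M"
    proof (rule ccontr)
      assume "x \<notin> M"
      then obtain z where z: "z \<in> M" "z \<in> U" "0 < norm (x - z)" "f z + ereal (r * norm (x - z)) \<le> f x"
        using P[OF dx] by blast
      have "g z + r * norm (x - z) \<le> g xb" using z(4) fg[OF z(1,2)] S_f[OF xS] by simp
      moreover have "g xb \<le> g z" by (rule gmin[OF z(1,2)])
      moreover have "r * norm (x - z) > 0" using r z(3) by simp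
      ultimately show False by simp
    qed
  qed
qed


lemma S_ne: "S \<noteq> {}" using xbS by blast

lemma dir1:
  assumes "\<exists>e>0. \<exists>\<mu>>0. \<forall>x\<in>ball xb e. subdiff f x \<noteq> {} \<longrightarrow> \<mu> * infdist x S \<le> infdist 0 (subdiff f x)"
  shows "\<exists>e>0. \<exists>\<mu>>0. \<forall>x\<in>ball xb e \<inter> M. \<mu> * infdist x (S \<inter> M) \<le> norm (riem_grad f M x)"
proof -
  obtain e1 \<mu> where e1: "e1 > 0" and mu: "\<mu> > 0"
    and I: "\<And>x. x \<in> ball xb e1 \<Longrightarrow> subdiff f x \<noteq> {} \<Longrightarrow> \<mu> * infdist x S \<le> infdist 0 (subdiff f x)"
    using assms by blast
  obtain r \<delta>K where r: "r > 0" and dK: "\<delta>K > 0" "ball xb \<delta>K \<subseteq> U"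
    and K0: "\<forall>z v. z \<in> M \<and> dist z xb < \<delta>K \<and> (\<forall>t\<in>T z. v \<bullet> t = 0) \<and> norm v \<le> r
      \<longrightarrow> riem_grad f M z + v \<in> subdiff f z"
    using K_lemma by blast
  obtain \<delta>i where di: "\<delta>i > 0" and ID0: "\<forall>x. dist x xb < \<delta>i \<longrightarrow> x \<in> S \<longrightarrow> x \<in> M"
    using ident by blast
  define e where "e = min e1 (min \<delta>K (\<delta>i / 2))"
  have e: "e > 0" using e1 dK di by (simp add: e_def)
  have "\<mu> * infdist x (S \<inter> M) \<le> norm (riem_grad f M x)" if x: "x \<in> ball xb e \<inter> M" for x
  proof -
    have xM: "x \<in> M" and dx: "dist x xb < e" using x by (auto simp: dist_commute)
    have dK': "dist x xb < \<delta>K" using dx by (simp add: e_def)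
    have "riem_grad f M x + 0 \<in> subdiff f x"
      using K0[rule_format, of x 0] xM dK' r by simp
    then have rgC: "riem_grad f M x \<in> subdiff f x" by simp
    have "x \<in> ball xb e1" using dx by (simp add: e_def dist_commute)
    from I[OF this] rgC have "\<mu> * infdist x S \<le> infdist 0 (subdiff f x)" by blast
    also have "\<dots> \<le> dist 0 (riem_grad f M x)" by (rule infdist_le[OF rgC])
    finally have A: "\<mu> * infdist x S \<le> norm (riem_grad f M x)" by simp
    obtain p where pS: "p \<in> S" and dp: "infdist x S = dist x p"
      using infdist_attains_inf[OF S_closed S_ne] by blast
    have "dist x p \<le> dist x xb" using infdist_le[OF xbS, of x] dp by simp
    then have "dist p xb < \<delta>i" using dist_triangle[of p xb x] dx
      by (simp add: e_def dist_commute)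
    then have "p \<in> M" using ID0 pS by blast
    then have "infdist x (S \<inter> M) \<le> infdist x S" using infdist_le[of p "S \<inter> M" x] pS dp by simp
    then have "\<mu> * infdist x (S \<inter> M) \<le> \<mu> * infdist x S" using mu by simp
    with A show ?thesis by simp
  qed
  then show ?thesis using e mu by blast
qed

lemma qgM:
  assumes "\<exists>e>0. \<exists>\<mu>>0. \<forall>x\<in>ball xb e \<inter> M. \<mu> * infdist x (S \<inter> M) \<le> norm (riem_grad f M x)"
  shows "\<exists>c>0. \<exists>\<delta>>0. ball xb \<delta> \<subseteq> U \<and> (\<forall>x. x \<in> M \<and> dist x xb < \<delta> \<longrightarrow> g xb + c * (infdist x (S \<inter> M))^2 \<le> g x)"
proof -
  obtain e2 \<mu> where e2: "e2 > 0" and mu: "\<mu> > 0"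
    and II: "\<And>x. x \<in> ball xb e2 \<inter> M \<Longrightarrow> \<mu> * infdist x (S \<inter> M) \<le> norm (riem_grad f M x)"
    using assms by blast
  obtain \<rho> where \<rho>: "\<rho> > 0" "cball xb \<rho> \<subseteq> U" using U xbU open_contains_cball by blast
  define \<delta> where "\<delta> = min (\<rho>/2) (e2/2)"
  have d0: "\<delta> > 0" using \<rho> e2 by (simp add: \<delta>_def)
  have bU: "ball xb \<delta> \<subseteq> U" using \<rho> by (auto simp: \<delta>_def)
  have SM: "xb \<in> S \<inter> M" using xbS xbM by simp
  have main: "g xb + (\<mu>/9) * (infdist x (S \<inter> M))^2 \<le> g x" if xM: "x \<in> M" and dx: "dist x xb < \<delta>" for x
  proof -
    define d where "d = infdist x (S \<inter> M)"
    have d0: "d \<ge> 0" by (simp add: d_def infdist_nonneg)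
    have dle: "d \<le> dist x xb" unfolding d_def by (rule infdist_le[OF SM])
    have xU: "x \<in> U" using dx \<rho> by (auto simp: \<delta>_def dist_commute)
    show ?thesis
    proof (cases "d = 0")
      case True then show ?thesis using gmin[OF xM xU] by (simp add: d_def)
    next
      case False
      then have dpos: "d > 0" using d0 by simp
      have cbU: "cball x d \<subseteq> U"
      proof
        fix y assume "y \<in> cball x d"
        then have "dist xb y \<le> dist xb x + dist x y" "dist x y \<le> d" using dist_triangle by auto
        then have "dist xb y \<le> \<rho>" using dle dx by (simp add: \<delta>_def dist_commute)
        then show "y \<in> U" using \<rho>(2) by auto
      qed
      define Cx where "Cx = M \<inter> cball x d"
      have cpt: "compact Cx" using cball_M_closed(2)[OF cbU] by (simp add: Cx_def)
      have xC: "x \<in> Cx" using xM dpos by (simp add: Cx_def)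
      define \<phi> where "\<phi> y = g y + \<mu> * ((y - x) \<bullet> (y - x))" for y
      have CxU: "Cx \<subseteq> U" using cbU by (auto simp: Cx_def)
      have "continuous_on Cx \<phi>" unfolding \<phi>_def
        by (intro continuous_on_add continuous_on_subset[OF gcont CxU] continuous_on_mult continuous_on_const
            continuous_on_inner continuous_on_diff continuous_on_id)
      then obtain ys where ysC: "ys \<in> Cx" and ysmin: "\<And>y. y \<in> Cx \<Longrightarrow> \<phi> ys \<le> \<phi> y"
        using continuous_attains_inf[OF cpt] xC by blast
      define a where "a = dist ys x"
      have a0: "a \<ge> 0" by (simp add: a_def)
      have ad: "a \<le> d" using ysC by (simp add: Cx_def a_def dist_commute)
      have ysM: "ys \<in> M" and ysU: "ys \<in> U" using ysC cbU by (auto simp: Cx_def)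
      have ysq: "(ys - x) \<bullet> (ys - x) = a^2"
        by (simp add: a_def dist_norm power2_norm_eq_inner)
      have "\<phi> ys \<le> \<phi> x" using ysmin[OF xC] .
      then have key: "g ys + \<mu> * a^2 \<le> g x" using ysq by (simp add: \<phi>_def)
      have gys: "g xb \<le> g ys" by (rule gmin[OF ysM ysU])
      have "\<mu> * a^2 \<le> g x - g xb" using key gys by simp
      moreover have "d^2 \<le> 9 * a^2"
      proof (cases "a < d")
        case True
        have W: "open (ball x d)" "ball x d \<subseteq> U" "ys \<in> ball x d"
          using cbU True by (auto simp: a_def dist_commute)
        have mn: "\<forall>u\<in>M \<inter> ball x d. g ys + \<mu> * ((ys - x) \<bullet> (ys - x)) \<le> g u + \<mu> * ((u - x) \<bullet> (u - x))"
          using ysmin by (auto simp: Cx_def \<phi>_def)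
        have rg: "norm (riem_grad f M ys) \<le> 2 * \<mu> * norm (ys - x)"
          by (rule fermat_qg[OF ysM ysU W mn]) (use mu in simp)
        have "dist ys xb \<le> dist ys x + dist x xb" by (rule dist_triangle)
        then have "dist ys xb < e2" using ad dle dx by (simp add: a_def \<delta>_def)
        then have "ys \<in> ball xb e2 \<inter> M" using ysM by (simp add: dist_commute)
        from II[OF this] rg have "\<mu> * infdist ys (S \<inter> M) \<le> 2 * \<mu> * a" by (simp add: a_def dist_norm)
        then have "infdist ys (S \<inter> M) \<le> 2 * a" using mu by simp
        moreover have "d \<le> infdist ys (S \<inter> M) + dist x ys" unfolding d_def by (rule infdist_triangle)
        ultimately have "d \<le> 3 * a" by (simp add: a_def dist_commute)
        then have "d^2 \<le> (3 * a)^2" using d0 by (intro power_mono) auto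
        then show ?thesis by (simp add: power_mult_distrib)
      next
        case False
        then have "a = d" using ad by simp
        then show ?thesis using a0 by simp
      qed
      moreover have "\<mu> / 9 * d^2 \<le> \<mu> / 9 * (9 * a^2)" if "d^2 \<le> 9 * a^2"
        using that mu by (intro mult_left_mono) auto
      ultimately have "\<mu> / 9 * d^2 \<le> g x - g xb" by simp
      then show ?thesis by (simp add: d_def)
    qed
  qed
  show ?thesis
    by (rule exI[of _ "\<mu>/9"], rule conjI, simp add: mu, rule exI[of _ \<delta>]) (use d0 bU main in blast)
qed


lemma qg:
  assumes "\<exists>e>0. \<exists>\<mu>>0. \<forall>x\<in>ball xb e \<inter> M. \<mu> * infdist x (S \<inter> M) \<le> norm (riem_grad f M x)"
  shows "\<exists>c>0. \<exists>\<delta>>0. \<forall>x. dist x xb < \<delta> \<longrightarrow> ereal (g xb + c * (infdist x S)^2) \<le> f x"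
proof -
  obtain c \<delta> where c: "c > 0" and d: "\<delta> > 0" and bU: "ball xb \<delta> \<subseteq> U"
    and Q0: "\<forall>x. x \<in> M \<and> dist x xb < \<delta> \<longrightarrow> g xb + c * (infdist x (S \<inter> M))^2 \<le> g x"
    using qgM[OF assms] by blast
  note Q = Q0[rule_format]
  obtain \<delta>p r where dp: "\<delta>p > 0" and r: "r > 0" and P0: "\<forall>x. dist x xb < \<delta>p \<longrightarrow> x \<notin> M \<longrightarrow> (\<exists>z. z \<in> M \<and> z \<in> U \<and> dist z xb \<le> 2 * dist x xb
      \<and> 0 < norm (x - z) \<and> norm (x - z) \<le> dist x xb \<and> f z + ereal (r * norm (x - z)) \<le> f x)"
    using proj by blast
  note P = P0[rule_format]
  define m where "m = min c r"
  have m: "m > 0" "m \<le> c" "m \<le> r" using c r by (auto simp: m_def)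
  define \<delta>' where "\<delta>' = min (\<delta>/2) (min \<delta>p 1)"
  have d': "\<delta>' > 0" using d dp by (simp add: \<delta>'_def)
  have SM: "S \<inter> M \<noteq> {}" "S \<inter> M \<subseteq> S" using xbS xbM by auto
  have main: "ereal (g xb + (m/2) * (infdist x S)^2) \<le> f x" if dx: "dist x xb < \<delta>'" for x
  proof -
  have h2: "2 * dist x xb < \<delta>" using dx by (simp add: \<delta>'_def)
  have dxd: "dist x xb < \<delta>" using h2 zero_le_dist[of x xb] by linarith
  show ?thesis
  proof (cases "x \<in> M")
    case True
    have "dist xb x < \<delta>" using dxd by (simp add: dist_commute)
    then have xU: "x \<in> U" using bU by auto
    have "infdist x S \<le> infdist x (S \<inter> M)" by (rule infdist_mono[OF SM(2) SM(1)])
    then have "(infdist x S)^2 \<le> (infdist x (S \<inter> M))^2" by (intro power_mono) (auto simp: infdist_nonneg)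
    then have "(m/2) * (infdist x S)^2 \<le> c * (infdist x (S \<inter> M))^2"
      using m by (intro mult_mono) auto
    moreover have "g xb + c * (infdist x (S \<inter> M))^2 \<le> g x" using Q True dxd by simp
    ultimately show ?thesis using fg[OF True xU] by simp
  next
    case False
    have "dist x xb < \<delta>p" using dx by (simp add: \<delta>'_def)
    then obtain z where z: "z \<in> M" "z \<in> U" "dist z xb \<le> 2 * dist x xb" "0 < norm (x - z)"
      "norm (x - z) \<le> dist x xb" "f z + ereal (r * norm (x - z)) \<le> f x"
      using P False by blast
    define a where "a = infdist z (S \<inter> M)"
    define b where "b = norm (x - z)"
    have a0: "a \<ge> 0" by (simp add: a_def infdist_nonneg)
    have b0: "b \<ge> 0" by (simp add: b_def)
    have b1: "b \<le> 1" using z(5) dx by (simp add: b_def \<delta>'_def)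
    have "dist z xb < \<delta>" using z(3) h2 by linarith
    then have Qz: "g xb + c * a^2 \<le> g z" using Q z(1) by (simp add: a_def)
    have "infdist x S \<le> infdist x (S \<inter> M)" by (rule infdist_mono[OF SM(2) SM(1)])
    also have "\<dots> \<le> a + b" using infdist_triangle[of x "S \<inter> M" z] by (simp add: a_def b_def dist_norm)
    finally have Da: "infdist x S \<le> a + b" .
    have "(infdist x S)^2 \<le> (a + b)^2" using Da by (intro power_mono) (auto simp: infdist_nonneg)
    also have "\<dots> \<le> 2 * (a^2 + b^2)" by (smt (verit) power2_sum sum_squares_ge_zero power2_diff zero_le_power2)
    finally have D2: "(m/2) * (infdist x S)^2 \<le> m * (a^2 + b^2)" using m by (simp add: mult_left_mono)
    have "b^2 \<le> b" using b0 b1 by (simp add: power2_eq_square mult_left_le_one_le)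
    then have "m * (a^2 + b^2) \<le> c * a^2 + r * b" using m b0
      by (smt (verit, del_insts) mult_right_mono zero_le_power2 distrib_left mult_left_mono)
    with D2 Qz have "g xb + (m/2) * (infdist x S)^2 \<le> g z + r * b" by simp
    moreover have "ereal (g z + r * b) \<le> f x" using z(6) fg[OF z(1,2)] by (simp add: b_def)
    ultimately show ?thesis by (meson ereal_less_eq(3) order_trans)
  qed
  qed
  have "\<exists>\<delta>>0. \<forall>x. dist x xb < \<delta> \<longrightarrow> ereal (g xb + (m/2) * (infdist x S)^2) \<le> f x"
    using d' main by blast
  moreover have "m/2 > 0" using m by simp
  ultimately show ?thesis by blast
qed

lemma dir2:
  assumes "\<exists>e>0. \<exists>\<mu>>0. \<forall>x\<in>ball xb e \<inter> M. \<mu> * infdist x (S \<inter> M) \<le> norm (riem_grad f M x)"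
  shows "\<exists>e>0. \<exists>\<mu>>0. \<forall>x\<in>ball xb e. subdiff f x \<noteq> {} \<longrightarrow> \<mu> * infdist x S \<le> infdist 0 (subdiff f x)"
proof -
  obtain c \<delta> where c: "c > 0" and d: "\<delta> > 0"
    and Q0: "\<forall>x. dist x xb < \<delta> \<longrightarrow> ereal (g xb + c * (infdist x S)^2) \<le> f x"
    using qg[OF assms] by blast
  have main: "c * infdist x S \<le> infdist 0 (subdiff f x)" if x: "x \<in> ball xb \<delta>" and ne: "subdiff f x \<noteq> {}" for x
  proof -
    define D where "D = infdist x S"
    have D0: "D \<ge> 0" by (simp add: D_def infdist_nonneg)
    obtain p where pS: "p \<in> S" and dp: "infdist x S = dist x p"
      using infdist_attains_inf[OF S_closed S_ne] by blast
    have Qx: "ereal (g xb + c * D^2) \<le> f x" using Q0 x by (simp add: D_def dist_commute)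
    have bound: "c * D \<le> norm q" if q: "q \<in> subdiff f x" for q
    proof -
      have "f x + ereal (q \<bullet> (p - x)) \<le> f p" and fin: "\<bar>f x\<bar> \<noteq> \<infinity>" using q by (simp_all add: sub_eq csub_def)
      then obtain fx where fx: "f x = ereal fx" "fx + q \<bullet> (p - x) \<le> g xb"
        using S_f[OF pS] by (cases "f x") auto
      have "g xb + c * D^2 \<le> fx" using Qx fx(1) by simp
      then have "c * D^2 \<le> - (q \<bullet> (p - x))" using fx(2) by simp
      also have "\<dots> \<le> norm q * norm (p - x)" using Cauchy_Schwarz_ineq2[of q "p - x"] by linarith
      also have "norm (p - x) = D" using dp by (simp add: D_def dist_norm norm_minus_commute)
      finally have le: "c * D^2 \<le> norm q * D" .
      show ?thesis
      proof (cases "D = 0")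
        case True then show ?thesis by simp
      next
        case False then have "D > 0" using D0 by simp
        moreover have "(c * D) * D \<le> norm q * D" using le by (simp add: power2_eq_square mult.assoc)
        ultimately show ?thesis by (rule mult_right_le_imp_le[rotated])
      qed
    qed
    have "c * D \<le> (INF q\<in>subdiff f x. dist 0 q)"
      by (rule cINF_greatest[OF ne]) (simp add: bound)
    then show ?thesis using ne by (simp add: infdist_def D_def)
  qed
  show ?thesis using c d main by blast
qed

end

theorem theorem4:
  fixes f :: "'a::euclidean_space \<Rightarrow> ereal" and M :: "'a set" and xb :: 'a
  assumes "proper_fun f" and "closed_fun f" and "convex_fun f"
    and "argmin_set f \<noteq> {}"
    and "xb \<in> argmin_set f"
    and "C1_submanifold M" and "xb \<in> M"
    and "C1_partly_smooth_around f M xb"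
    and "0 \<in> rel_interior (subdiff f xb)"
  shows "(\<exists>e>0. \<exists>\<mu>>0. \<forall>x\<in>ball xb e.
             subdiff f x \<noteq> {} \<longrightarrow> \<mu> * infdist x (argmin_set f) \<le> infdist 0 (subdiff f x))
     \<longleftrightarrow>
         (\<exists>e>0. \<exists>\<mu>>0. \<forall>x\<in>ball xb e \<inter> M.
             \<mu> * infdist x (argmin_set f \<inter> M) \<le> norm (riem_grad f M x))"
proof -
  obtain e0 where "e0 > 0" and e0: "\<forall>z\<in>M. dist z xb < e0 \<longrightarrow> partly_smooth_at f M z"
    using assms(8) unfolding C1_partly_smooth_around_def by blast
  have ps: "partly_smooth_at f M xb" using e0 assms(7) \<open>e0 > 0\<close> by simp
  have "\<exists>r>0. \<forall>z\<in>M. dist z xb < r \<longrightarrow> frechet_subdiff f z = subdiff f z \<and> subdiff f z \<noteq> {}"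
    using ps unfolding partly_smooth_at_def by (elim conjE)
  then obtain r0 where r0: "r0 > 0" and reg0: "\<forall>z\<in>M. dist z xb < r0 \<longrightarrow> frechet_subdiff f z = subdiff f z \<and> subdiff f z \<noteq> {}"
    by blast
  have "restricted_C1 f M xb" using ps unfolding partly_smooth_at_def by (elim conjE)
  then obtain U1 g g' where e1: "local_smooth_ext f M xb U1 g g'"
    unfolding restricted_C1_def by blast
  have "\<forall>z\<in>M. \<exists>U L (F::'a \<Rightarrow> 'a) (F'::'a \<Rightarrow> 'a \<Rightarrow>\<^sub>L 'a).
     open U \<and> z \<in> U \<and> subspace L \<and>
     (\<forall>y\<in>U. F y \<in> L \<and> (F has_derivative blinfun_apply (F' y)) (at y) \<and>
             range (blinfun_apply (F' y)) = L) \<and>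
     continuous_on U F' \<and> M \<inter> U = {y\<in>U. F y = 0}"
    using assms(6) unfolding C1_submanifold_def .
  from bspec[OF this assms(7)] obtain U0 L and F :: "'a \<Rightarrow> 'a" and F' :: "'a \<Rightarrow> 'a \<Rightarrow>\<^sub>L 'a" where U0: "open U0" "xb \<in> U0" "subspace L"
    and ch0: "\<forall>y\<in>U0. F y \<in> L \<and> (F has_derivative blinfun_apply (F' y)) (at y) \<and> range (blinfun_apply (F' y)) = L"
    and Fc0: "continuous_on U0 F'" and MU0: "M \<inter> U0 = {y\<in>U0. F y = 0}"
    by blast
  define U where "U = U0 \<inter> U1 \<inter> ball xb r0"
  have UU0: "U \<subseteq> U0" and UU1: "U \<subseteq> U1" by (auto simp: U_def)
  have oU: "open U" using U0(1) e1 by (auto simp: U_def local_smooth_ext_def)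
  have xbU: "xb \<in> U" using U0(2) e1 r0 by (auto simp: U_def local_smooth_ext_def)
  have ch: "chart U L F F'"
  proof
    show "open U" by fact
    show "subspace L" by fact
    fix y assume "y \<in> U"
    then have "y \<in> U0" using UU0 by auto
    then show "F y \<in> L" "(F has_derivative blinfun_apply (F' y)) (at y)" "range (blinfun_apply (F' y)) = L"
      using ch0 by auto
  next
    show "continuous_on U F'" using continuous_on_subset[OF Fc0 UU0] .
  qed
  have ext: "local_smooth_ext f M xb U g g'"
    unfolding local_smooth_ext_def C1_on_with_grad_def
  proof (intro conjI ballI)
    show "open U" "xb \<in> U" by fact+
    fix y assume "y \<in> U"
    then have "y \<in> U1" using UU1 by auto
    then show "(g has_derivative (\<lambda>h. g' y \<bullet> h)) (at y)"
      using e1 by (auto simp: local_smooth_ext_def C1_on_with_grad_def)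
  next
    show "continuous_on U g'" using e1 continuous_on_subset[OF _ UU1]
      by (auto simp: local_smooth_ext_def C1_on_with_grad_def)
  next
    fix y assume "y \<in> M \<inter> U"
    then show "f y = ereal (g y)" using e1 UU1 by (auto simp: local_smooth_ext_def)
  qed
  have st: "setting U L F F' f M xb g g'"
  proof (rule setting.intro[OF ch], unfold_locales)
    show "proper_fun f" "convex_fun f" "closed_fun f" "xb \<in> argmin_set f" "xb \<in> M"
      using assms by auto
    show "xb \<in> U" by fact
    show "M \<inter> U = {y \<in> U. F y = 0}" using MU0 UU0 by auto
    show "local_smooth_ext f M xb U g g'" by fact
    show "partly_smooth_at f M xb" by fact
    show "0 \<in> rel_interior (subdiff f xb)" by fact
    fix z assume "z \<in> M" "z \<in> U"
    then show "subdiff f z \<noteq> {}" using reg0 by (auto simp: U_def dist_commute)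
  qed
  show ?thesis using setting.dir1[OF st] setting.dir2[OF st] by blast
qed

end
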